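(* Let $\hat X \in U(d)$ and define $F = \int d\psi\, |\langle\psi|\hat X|\psi\rangle|^2$ and $D^2 = \int d\psi\, |\langle\psi|\hat X|\psi\rangle|^4 - F^2$. Then $$F = \frac{d + |\mathrm{tr}(\hat X)|^2}{d(d+1)},$$ $$D^2 = \frac{2d(d+3) + 4(d+2)|\mathrm{tr}(\hat X)|^2 + |\mathrm{tr}(\hat X^2)|^2 + |\mathrm{tr}(\hat X)|^4 + 2\,\mathrm{Re}\bigl[\mathrm{tr}(\hat X^2)\,\mathrm{tr}(\hat X^\dagger)^2\bigr]}{d(d+1)(d+2)(d+3)} - F^2.$$
   Context: $d\psi$ denotes the unitarily invariant (Haar-induced) probability measure on unit vectors of $\mathbb{C}^d$. *)

theory Defs
  imports "HOL-Analysis.Analysis" "HOL-Probability.Probability"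
begin

definition cmat_adj :: "complex^'n^'n \<Rightarrow> complex^'n^'n" where
  "cmat_adj A = (\<chi> i j. cnj (A $ j $ i))"

definition unitary_cmat :: "complex^'n^'n \<Rightarrow> bool" where
  "unitary_cmat U \<longleftrightarrow> U ** cmat_adj U = mat 1 \<and> cmat_adj U ** U = mat 1"

definition braket :: "complex^'n \<Rightarrow> complex^'n^'n \<Rightarrow> complex" where
  "braket \<psi> X = (\<Sum>i\<in>UNIV. cnj (\<psi> $ i) * (X *v \<psi>) $ i)"

definition haar_state_measure :: "(complex^'n) measure \<Rightarrow> bool" where
  "haar_state_measure M \<longleftrightarrow>
     prob_space M \<and> sets M = sets borel \<and> (AE \<psi> in M. norm \<psi> = 1) \<and>
     (\<forall>U. unitary_cmat U \<longrightarrow> distr M borel (\<lambda>\<psi>. U *v \<psi>) = M)"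

end

theory Submission
  imports Defs
begin

locale haar =
  fixes M :: "(complex^'n) measure"
  assumes H: "haar_state_measure M"
begin

lemma PS: "prob_space M" and SM: "sets M = sets borel" and AEn: "AE \<psi> in M. norm \<psi> = 1"
  and INV: "unitary_cmat U \<Longrightarrow> distr M borel (\<lambda>\<psi>. U *v \<psi>) = M"
  using H unfolding haar_state_measure_def by auto

lemma meas_cont: "continuous_on UNIV f \<Longrightarrow> f \<in> borel_measurable M"
  using borel_measurable_continuous_onI measurable_cong_sets[OF SM refl] by blast

lemma integrable_cont:
  fixes f :: "complex^'n \<Rightarrow> complex"
  assumes f: "continuous_on UNIV f"
  shows "integrable M f"
proof -
  interpret prob_space M by (rule PS)
  have "compact (f ` sphere 0 1)"
    by (rule compact_continuous_image[OF continuous_on_subset[OF f] compact_sphere]) auto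
  then have "bounded (f ` sphere 0 1)" by (rule compact_imp_bounded)
  then obtain B where B: "\<And>x. x \<in> f ` sphere 0 1 \<Longrightarrow> norm x \<le> B"
    unfolding bounded_iff by blast
  have "AE \<psi> in M. norm (f \<psi>) \<le> B"
    using AEn by eventually_elim (rule B, simp)
  then show ?thesis
    by (rule integrable_const_bound) (rule meas_cont[OF f])
qed

definition Ec :: "(complex^'n \<Rightarrow> complex) \<Rightarrow> complex" where
  "Ec f = integral\<^sup>L M f"

lemma cont_mv: "continuous_on UNIV (\<lambda>\<psi>::complex^'n. U *v \<psi>)"
  by (intro linear_continuous_on linear_conv_bounded_linear[THEN iffD1] matrix_vector_mul_linear)

lemma Ec_inv:
  assumes U: "unitary_cmat U" and f: "continuous_on UNIV f"
  shows "Ec f = Ec (\<lambda>\<psi>. f (U *v \<psi>))"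
proof -
  have m: "(\<lambda>\<psi>. U *v \<psi>) \<in> measurable M borel"
    by (rule meas_cont[OF cont_mv])
  have "Ec f = integral\<^sup>L (distr M borel (\<lambda>\<psi>. U *v \<psi>)) f"
    unfolding Ec_def INV[OF U] ..
  also have "\<dots> = Ec (\<lambda>\<psi>. f (U *v \<psi>))"
    unfolding Ec_def by (rule integral_distr[OF m borel_measurable_continuous_onI[OF f]])
  finally show ?thesis .
qed

end

definition phm :: "'n \<Rightarrow> complex \<Rightarrow> complex^'n^'n" where
  "phm a c = (\<chi> i j. if i = j then (if i = a then c else 1) else 0)"

lemma phm_mv: "phm a c *v \<psi> = (\<chi> i. if i = a then c * \<psi>$i else \<psi>$i)"
  by (simp add: phm_def matrix_vector_mult_def vec_eq_iff if_distrib[of "\<lambda>x. x * _"] sum.delta cong: if_cong)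

lemma phm_unitary: "cnj c * c = 1 \<Longrightarrow> unitary_cmat (phm a c)"
  unfolding unitary_cmat_def cmat_adj_def phm_def
  by (auto simp: matrix_matrix_mult_def vec_eq_iff mat_def if_distrib[of "\<lambda>x. x * _"] sum.delta mult.commute cong: if_cong)

definition swp :: "'n \<Rightarrow> 'n \<Rightarrow> 'n \<Rightarrow> 'n" where
  "swp a b i = (if i = a then b else if i = b then a else i)"

lemma swp_swp[simp]: "swp a b (swp a b i) = i" by (simp add: swp_def)
lemma swp_eq_iff[simp]: "swp a b i = swp a b k \<longleftrightarrow> i = k" 
  by (auto simp: swp_def)
lemma swp_eq_iff2: "i = swp a b j \<longleftrightarrow> j = swp a b i"
  by (auto simp: swp_def)

definition swm :: "'n \<Rightarrow> 'n \<Rightarrow> complex^'n^'n" where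
  "swm a b = (\<chi> i j. if j = swp a b i then 1 else 0)"

lemma sum_delta_mult: "(\<Sum>j\<in>UNIV. (if j = x then 1 else 0) * f j) = (f (x::'n::finite) :: complex)"
  by (simp add: if_distrib[of "\<lambda>x. x * _"] sum.delta sum.delta' cong: if_cong)

lemma swm_mv: "swm a b *v \<psi> = (\<chi> i. \<psi> $ swp a b i)"
  unfolding swm_def matrix_vector_mult_def vec_lambda_beta sum_delta_mult ..

lemma cnj_if01[simp]: "cnj (if c then 1 else 0) = (if c then 1 else 0)" by simp

lemma swm_unitary: "unitary_cmat (swm a b)"
proof -
  have 1: "(\<Sum>j\<in>UNIV. (if j = swp a b i then 1 else 0) * (if j = swp a b k then 1 else 0)) = (if i = k then 1 else (0::complex))" for i k
    by (subst sum_delta_mult) simp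
  have 2: "(\<Sum>j\<in>UNIV. (if i = swp a b j then 1 else 0) * (if k = swp a b j then 1 else 0)) = (if i = k then 1 else (0::complex))" for i k
    unfolding swp_eq_iff2[of i] swp_eq_iff2[of k] by (subst sum_delta_mult) (auto simp: swp_eq_iff2)
  show ?thesis
    unfolding unitary_cmat_def cmat_adj_def swm_def matrix_matrix_mult_def mat_def vec_lambda_beta
    by (simp add: 1 2 vec_eq_iff del: swp_eq_iff)
qed

definition rr :: complex where "rr = of_real (1 / sqrt 2)"

lemma rr2: "rr * rr = 1/2"
  by (simp add: rr_def of_real_mult[symmetric] del: of_real_mult) 

definition rotm :: "'n \<Rightarrow> 'n \<Rightarrow> complex^'n^'n" where
  "rotm a b = (\<chi> i j. if i = a then (if j = a \<or> j = b then rr else 0)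
     else if i = b then (if j = a then rr else if j = b then - rr else 0)
     else if i = j then 1 else 0)"

lemma sum_two:
  assumes "a \<noteq> b" "\<And>j. j \<noteq> a \<Longrightarrow> j \<noteq> b \<Longrightarrow> f j = 0"
  shows "sum f (UNIV::'n::finite set) = f a + f b"
proof -
  have "sum f UNIV = sum f {a,b}"
    by (rule sum.mono_neutral_right) (use assms in auto)
  then show ?thesis using assms by simp
qed

context fixes a b :: "'n::finite" assumes ab: "a \<noteq> b"
begin
lemma R_e: "rotm a b $ a $ a = rr" "rotm a b $ a $ b = rr" "rotm a b $ b $ a = rr" "rotm a b $ b $ b = - rr"
  "j \<noteq> a \<Longrightarrow> j \<noteq> b \<Longrightarrow> rotm a b $ a $ j = 0"
  "j \<noteq> a \<Longrightarrow> j \<noteq> b \<Longrightarrow> rotm a b $ b $ j = 0"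
  "i \<noteq> a \<Longrightarrow> i \<noteq> b \<Longrightarrow> rotm a b $ i $ j = (if i = j then 1 else 0)"
  using ab by (auto simp: rotm_def)

lemma rotm_mv:
  shows "rotm a b *v \<psi> = (\<chi> i. if i = a then rr * (\<psi>$a + \<psi>$b)
     else if i = b then rr * (\<psi>$a - \<psi>$b) else \<psi>$i)"
proof -
  have "(rotm a b *v \<psi>) $ i = (if i = a then rr * (\<psi>$a + \<psi>$b)
     else if i = b then rr * (\<psi>$a - \<psi>$b) else \<psi>$i)" for i
  proof (cases "i = a \<or> i = b")
    case True
    have "(rotm a b *v \<psi>) $ i = rotm a b $ i $ a * \<psi>$a + rotm a b $ i $ b * \<psi>$b"
      unfolding matrix_vector_mult_def vec_lambda_beta
      by (rule sum_two[OF ab]) (use True R_e in auto)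
    then show ?thesis using True ab by (auto simp: R_e algebra_simps)
  next
    case False
    then have "(rotm a b *v \<psi>) $ i = (\<Sum>j\<in>UNIV. (if i = j then 1 else 0) * \<psi>$j)"
      unfolding matrix_vector_mult_def by (simp add: R_e)
    then show ?thesis using False by (simp add: if_distrib[of "\<lambda>x. x * _"] cong: if_cong)
  qed
  then show ?thesis by (intro iffD2[OF vec_eq_iff] allI) simp
qed

lemma rotm_adj: "cmat_adj (rotm a b) = rotm a b"
  unfolding cmat_adj_def rotm_def by (auto simp: vec_eq_iff rr_def)

lemma rotm_sq: shows "rotm a b ** rotm a b = mat 1"
proof -
  have "(\<Sum>j\<in>UNIV. rotm a b $ i $ j * rotm a b $ j $ k) = (if i = k then 1 else 0)" for i k
  proof (cases "i = a \<or> i = b")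
    case True
    have "(\<Sum>j\<in>UNIV. rotm a b $ i $ j * rotm a b $ j $ k) = rotm a b $ i $ a * rotm a b $ a $ k + rotm a b $ i $ b * rotm a b $ b $ k"
      by (rule sum_two[OF ab]) (use True R_e in auto)
    also have "\<dots> = (if i = k then 1 else 0)"
      using True ab by (cases "k = a \<or> k = b") (auto simp: R_e rr2)
    finally show ?thesis .
  next
    case False
    then have "(\<Sum>j\<in>UNIV. rotm a b $ i $ j * rotm a b $ j $ k) = (\<Sum>j\<in>UNIV. (if i = j then 1 else 0) * rotm a b $ j $ k)"
      by (simp add: R_e)
    then show ?thesis using False by (simp add: if_distrib[of "\<lambda>x. x * _"] R_e cong: if_cong)
  qed
  then show ?thesis by (simp add: matrix_matrix_mult_def mat_def vec_eq_iff)
qed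

lemma rotm_unitary: "unitary_cmat (rotm a b)"
  unfolding unitary_cmat_def rotm_adj using rotm_sq by simp
end

lemma cont_nth[continuous_intros]: fixes f :: "'b::topological_space \<Rightarrow> complex^'n" shows "continuous_on S f \<Longrightarrow> continuous_on S (\<lambda>x. f x $ i)"
proof -
  have "continuous_on UNIV (\<lambda>x::complex^'n. x$i)"
    by (rule linear_continuous_on[OF bounded_linear_vec_nth])
  then show "continuous_on S f \<Longrightarrow> continuous_on S (\<lambda>x. f x $ i)"
    using continuous_on_compose2 by blast
qed

context haar
begin

lemma Ec_add: "continuous_on UNIV f \<Longrightarrow> continuous_on UNIV g \<Longrightarrow> Ec (\<lambda>\<psi>. f \<psi> + g \<psi>) = Ec f + Ec g"
  unfolding Ec_def by (intro Bochner_Integration.integral_add integrable_cont)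
lemma Ec_diff: "continuous_on UNIV f \<Longrightarrow> continuous_on UNIV g \<Longrightarrow> Ec (\<lambda>\<psi>. f \<psi> - g \<psi>) = Ec f - Ec g"
  unfolding Ec_def by (intro Bochner_Integration.integral_diff integrable_cont)
lemma Ec_cmult: "Ec (\<lambda>\<psi>. c * f \<psi>) = c * Ec f"
  unfolding Ec_def by simp
lemma Ec_multc: "Ec (\<lambda>\<psi>. f \<psi> * c) = Ec f * c"
  unfolding Ec_def by simp
lemma Ec_const: "Ec (\<lambda>\<psi>. c) = c"
proof -
  interpret prob_space M by (rule PS)
  show ?thesis unfolding Ec_def by (simp add: prob_space)
qed
lemma Ec_sum: "(\<And>x. x \<in> A \<Longrightarrow> continuous_on UNIV (f x)) \<Longrightarrow> Ec (\<lambda>\<psi>. \<Sum>x\<in>A. f x \<psi>) = (\<Sum>x\<in>A. Ec (f x))"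
  unfolding Ec_def by (intro Bochner_Integration.integral_sum integrable_cont) auto
lemma Ec_AE: "continuous_on UNIV f \<Longrightarrow> continuous_on UNIV g \<Longrightarrow> AE \<psi> in M. f \<psi> = g \<psi> \<Longrightarrow> Ec f = Ec g"
  unfolding Ec_def by (rule integral_cong_AE) (auto intro: meas_cont)

end

definition cc :: complex where "cc = rr + \<i> * rr"

lemma cnj_rr[simp]: "cnj rr = rr" by (simp add: rr_def)
lemma cc_norm: "cnj cc * cc = 1"
proof -
  have "cnj cc * cc = 2 * (rr * rr)" by (simp add: cc_def algebra_simps)
  then show ?thesis by (simp add: rr2)
qed
lemma cc_sq: "cc * cc = \<i>"
proof -
  have "cc * cc = 2 * \<i> * (rr * rr)" by (simp add: cc_def algebra_simps)
  then show ?thesis by (simp add: rr2)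
qed
lemma cnjcc_sq: "cnj cc * cnj cc = - \<i>"
  using arg_cong[OF cc_sq, of cnj] by simp

definition P :: "'n \<Rightarrow> complex^'n \<Rightarrow> complex" where
  "P a \<psi> = cnj (\<psi>$a) * \<psi>$a"

lemma cont_P[continuous_intros]: "continuous_on S f \<Longrightarrow> continuous_on S (\<lambda>x. P a (f x))"
  unfolding P_def by (intro continuous_intros)

context haar
begin

lemma Ec_phase0:
  assumes c: "cnj c * c = 1" and f: "continuous_on UNIV f"
    and fD: "\<And>\<psi>. f (\<chi> i. if i = a then c * \<psi>$i else \<psi>$i) = w * f \<psi>" and w: "w \<noteq> 1"
  shows "Ec f = 0"
proof -
  have "Ec f = Ec (\<lambda>\<psi>. f (phm a c *v \<psi>))" by (rule Ec_inv[OF phm_unitary[OF c] f])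
  also have "\<dots> = w * Ec f" unfolding phm_mv fD by (rule Ec_cmult)
  finally have "(1 - w) * Ec f = 0" by (simp add: algebra_simps)
  then show ?thesis using w by simp
qed

lemma Ec_swap:
  assumes f: "continuous_on UNIV f"
  shows "Ec f = Ec (\<lambda>\<psi>. f (\<chi> i. \<psi> $ swp a b i))"
  using Ec_inv[OF swm_unitary f] unfolding swm_mv .

lemma Ec_rot:
  assumes ab: "a \<noteq> b" and f: "continuous_on UNIV f"
  shows "Ec f = Ec (\<lambda>\<psi>. f (\<chi> i. if i = a then rr * (\<psi>$a + \<psi>$b)
     else if i = b then rr * (\<psi>$a - \<psi>$b) else \<psi>$i))"
  using Ec_inv[OF rotm_unitary[OF ab] f] unfolding rotm_mv[OF ab] .

end

definition Z :: "'n \<Rightarrow> 'n \<Rightarrow> complex^'n \<Rightarrow> complex" where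
  "Z a b \<psi> = (\<psi>$a)^2 * (cnj (\<psi>$b))^2"

lemma cont_Z[continuous_intros]: "continuous_on S f \<Longrightarrow> continuous_on S (\<lambda>x. Z a b (f x))"
  unfolding Z_def by (intro continuous_intros)

lemma rot_ident:
  fixes al be :: complex
  shows "(cnj (rr * (al + be)) * (rr * (al + be))) * (cnj (rr * (al - be)) * (rr * (al - be)))
    = ((cnj al * al)^2 + (cnj be * be)^2 - al^2 * (cnj be)^2 - (cnj al)^2 * be^2) / 4"
proof -
  have "(cnj (rr * (al + be)) * (rr * (al + be))) * (cnj (rr * (al - be)) * (rr * (al - be)))
    = (rr * rr) * (rr * rr) * ((cnj al * al)^2 + (cnj be * be)^2 - al^2 * (cnj be)^2 - (cnj al)^2 * be^2)"
    by (simp add: algebra_simps power2_eq_square)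
  then show ?thesis by (simp add: rr2)
qed

context haar
begin

lemma PW: 
  assumes ab: "a \<noteq> b"
  shows "P a (\<chi> i. if i = a then rr * (\<psi>$a + \<psi>$b) else if i = b then rr * (\<psi>$a - \<psi>$b) else \<psi>$i) *
         P b (\<chi> i. if i = a then rr * (\<psi>$a + \<psi>$b) else if i = b then rr * (\<psi>$a - \<psi>$b) else \<psi>$i)
   = (P a \<psi>^2 + P b \<psi>^2 - Z a b \<psi> - Z b a \<psi>) / 4"
  using ab rot_ident[of "\<psi>$a" "\<psi>$b"] by (simp add: P_def Z_def)

lemma Z_phase: "a \<noteq> b \<Longrightarrow> Z a b (\<chi> i. if i = a then cc * \<psi>$i else \<psi>$i) = \<i> * Z a b \<psi>"
  "a \<noteq> b \<Longrightarrow> Z b a (\<chi> i. if i = a then cc * \<psi>$i else \<psi>$i) = - \<i> * Z b a \<psi>"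
  by (simp_all add: Z_def power2_eq_square algebra_simps cc_sq cnjcc_sq)
    (simp_all add: mult.assoc[symmetric] cnjcc_sq)


abbreviation Wv :: "'n \<Rightarrow> 'n \<Rightarrow> complex^'n \<Rightarrow> complex^'n" where
  "Wv a b \<psi> \<equiv> (\<chi> i. if i = a then rr * (\<psi>$a + \<psi>$b) else if i = b then rr * (\<psi>$a - \<psi>$b) else \<psi>$i)"
abbreviation Dv :: "'n \<Rightarrow> complex^'n \<Rightarrow> complex^'n" where
  "Dv a \<psi> \<equiv> (\<chi> i. if i = a then cc * \<psi>$i else \<psi>$i)"

lemma P_D[simp]: "P c (Dv a \<psi>) = P c \<psi>"
proof -
  have "cnj cc * cnj x * (cc * x) = cnj x * x" for x
    using cc_norm by (metis mult.assoc mult.left_commute mult_1_right)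
  then show ?thesis by (simp add: P_def)
qed

lemma Ec_lin4:
  assumes "continuous_on UNIV f1" "continuous_on UNIV f2" "continuous_on UNIV f3" "continuous_on UNIV f4"
  shows "Ec (\<lambda>\<psi>. c * (f1 \<psi> + f2 \<psi> - f3 \<psi> - f4 \<psi>)) = c * (Ec f1 + Ec f2 - Ec f3 - Ec f4)"
proof -
  have "Ec (\<lambda>\<psi>. c * (f1 \<psi> + f2 \<psi> - f3 \<psi> - f4 \<psi>)) = c * Ec (\<lambda>\<psi>. f1 \<psi> + f2 \<psi> - f3 \<psi> - f4 \<psi>)"
    by (rule Ec_cmult)
  also have "Ec (\<lambda>\<psi>. f1 \<psi> + f2 \<psi> - f3 \<psi> - f4 \<psi>) = Ec (\<lambda>\<psi>. f1 \<psi> + f2 \<psi> - f3 \<psi>) - Ec f4"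
    by (rule Ec_diff) (use assms in \<open>auto intro!: continuous_intros\<close>)
  also have "Ec (\<lambda>\<psi>. f1 \<psi> + f2 \<psi> - f3 \<psi>) = Ec (\<lambda>\<psi>. f1 \<psi> + f2 \<psi>) - Ec f3"
    by (rule Ec_diff) (use assms in \<open>auto intro!: continuous_intros\<close>)
  also have "Ec (\<lambda>\<psi>. f1 \<psi> + f2 \<psi>) = Ec f1 + Ec f2"
    by (rule Ec_add) (use assms in \<open>auto intro!: continuous_intros\<close>)
  finally show ?thesis .
qed

lemma K1:
  assumes ab: "a \<noteq> b" and q: "continuous_on UNIV q"
    and qW: "\<And>\<psi>. q (Wv a b \<psi>) = q \<psi>" and qD: "\<And>\<psi>. q (Dv a \<psi>) = q \<psi>"
  shows "Ec (\<lambda>\<psi>. P a \<psi> * P b \<psi> * q \<psi>) = (Ec (\<lambda>\<psi>. P a \<psi>^2 * q \<psi>) + Ec (\<lambda>\<psi>. P b \<psi>^2 * q \<psi>)) / 4"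
proof -
  have "Ec (\<lambda>\<psi>. P a \<psi> * P b \<psi> * q \<psi>) = Ec (\<lambda>\<psi>. P a (Wv a b \<psi>) * P b (Wv a b \<psi>) * q (Wv a b \<psi>))"
    by (rule Ec_rot[OF ab]) (intro continuous_intros q)
  also have "\<dots> = Ec (\<lambda>\<psi>. (1/4) * (P a \<psi>^2 * q \<psi> + P b \<psi>^2 * q \<psi> - Z a b \<psi> * q \<psi> - Z b a \<psi> * q \<psi>))"
    unfolding qW PW[OF ab] by (intro arg_cong[where f=Ec] ext) (simp add: field_simps)
  also have "\<dots> = (1/4) * (Ec (\<lambda>\<psi>. P a \<psi>^2 * q \<psi>) + Ec (\<lambda>\<psi>. P b \<psi>^2 * q \<psi>) - Ec (\<lambda>\<psi>. Z a b \<psi> * q \<psi>) - Ec (\<lambda>\<psi>. Z b a \<psi> * q \<psi>))"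
    by (rule Ec_lin4) (intro continuous_intros q)+
  also have "Ec (\<lambda>\<psi>. Z a b \<psi> * q \<psi>) = 0"
    by (rule Ec_phase0[OF cc_norm, where a=a and w=\<i>]) (auto intro!: continuous_intros q simp: Z_phase[OF ab] qD)
  also have "Ec (\<lambda>\<psi>. Z b a \<psi> * q \<psi>) = 0"
    by (rule Ec_phase0[OF cc_norm, where a=a and w="-\<i>"]) (auto intro!: continuous_intros q simp: Z_phase[OF ab] qD complex_eq_iff)
  finally show ?thesis by simp
qed

lemma K2:
  assumes ab: "a \<noteq> b"
  shows "Ec (\<lambda>\<psi>. P a \<psi>^2 * P b \<psi>^2) = (Ec (\<lambda>\<psi>. P a \<psi>^4) + Ec (\<lambda>\<psi>. P b \<psi>^4) + 4 * Ec (\<lambda>\<psi>. P a \<psi>^2 * P b \<psi>^2)) / 16"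
proof -
  have zz: "Z a b \<psi> * Z b a \<psi> = P a \<psi>^2 * P b \<psi>^2" for \<psi>
    by (simp add: Z_def P_def algebra_simps power2_eq_square)
  have pw: "((P a \<psi>^2 + P b \<psi>^2 - Z a b \<psi> - Z b a \<psi>) / 4)^2 =
         1 / 16 * (P a \<psi> ^ 4 + P b \<psi> ^ 4 + 4 * (P a \<psi>^2 * P b \<psi>^2) + (Z a b \<psi>^2 + Z b a \<psi>^2) -
                   2 * ((P a \<psi>^2 + P b \<psi>^2) * Z a b \<psi>) - 2 * ((P a \<psi>^2 + P b \<psi>^2) * Z b a \<psi>))" for \<psi>
  proof -
    have "((P a \<psi>^2 + P b \<psi>^2 - Z a b \<psi> - Z b a \<psi>) / 4)^2 = 
       1 / 16 * (P a \<psi> ^ 4 + P b \<psi> ^ 4 + 2 * (Z a b \<psi> * Z b a \<psi>) + 2 * (P a \<psi>^2 * P b \<psi>^2) + (Z a b \<psi>^2 + Z b a \<psi>^2) -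
                   2 * ((P a \<psi>^2 + P b \<psi>^2) * Z a b \<psi>) - 2 * ((P a \<psi>^2 + P b \<psi>^2) * Z b a \<psi>))"
      by (simp add: power2_eq_square power4_eq_xxxx field_simps)
    then show ?thesis by (simp add: zz)
  qed
  have "Ec (\<lambda>\<psi>. P a \<psi>^2 * P b \<psi>^2) = Ec (\<lambda>\<psi>. (P a (Wv a b \<psi>) * P b (Wv a b \<psi>))^2)"
    unfolding power_mult_distrib[symmetric] by (rule Ec_rot[OF ab]) (intro continuous_intros)
  also have "\<dots> = Ec (\<lambda>\<psi>. (1/16) * ((P a \<psi>^4 + P b \<psi>^4 + 4 * (P a \<psi>^2 * P b \<psi>^2)) + (Z a b \<psi>^2 + Z b a \<psi>^2)
       - 2 * ((P a \<psi>^2 + P b \<psi>^2) * Z a b \<psi>) - 2 * ((P a \<psi>^2 + P b \<psi>^2) * Z b a \<psi>)))"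
    unfolding PW[OF ab] by (intro arg_cong[where f=Ec] ext) (simp add: pw)
  also have "\<dots> = (1/16) * (Ec (\<lambda>\<psi>. P a \<psi>^4 + P b \<psi>^4 + 4 * (P a \<psi>^2 * P b \<psi>^2)) + Ec (\<lambda>\<psi>. Z a b \<psi>^2 + Z b a \<psi>^2)
       - Ec (\<lambda>\<psi>. 2 * ((P a \<psi>^2 + P b \<psi>^2) * Z a b \<psi>)) - Ec (\<lambda>\<psi>. 2 * ((P a \<psi>^2 + P b \<psi>^2) * Z b a \<psi>)))"
    by (rule Ec_lin4) (intro continuous_intros)+
  also have "Ec (\<lambda>\<psi>. Z a b \<psi>^2 + Z b a \<psi>^2) = Ec (\<lambda>\<psi>. Z a b \<psi>^2) + Ec (\<lambda>\<psi>. Z b a \<psi>^2)"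
    by (rule Ec_add) (intro continuous_intros)+
  also have "Ec (\<lambda>\<psi>. Z a b \<psi>^2) = 0"
    by (rule Ec_phase0[OF cc_norm, where a=a and w="-1"]) (auto intro!: continuous_intros simp: Z_phase[OF ab] power2_eq_square algebra_simps)
  also have "Ec (\<lambda>\<psi>. Z b a \<psi>^2) = 0"
    by (rule Ec_phase0[OF cc_norm, where a=a and w="-1"]) (auto intro!: continuous_intros simp: Z_phase[OF ab] power2_eq_square algebra_simps)
  also have "Ec (\<lambda>\<psi>. 2 * ((P a \<psi>^2 + P b \<psi>^2) * Z a b \<psi>)) = 0"
    by (rule Ec_phase0[OF cc_norm, where a=a and w="\<i>"]) (auto intro!: continuous_intros simp: Z_phase[OF ab] ab)
  also have "Ec (\<lambda>\<psi>. 2 * ((P a \<psi>^2 + P b \<psi>^2) * Z b a \<psi>)) = 0"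
    by (rule Ec_phase0[OF cc_norm, where a=a and w="-\<i>"]) (auto intro!: continuous_intros simp: Z_phase[OF ab] ab complex_eq_iff)
  also have "Ec (\<lambda>\<psi>. P a \<psi>^4 + P b \<psi>^4 + 4 * (P a \<psi>^2 * P b \<psi>^2)) = Ec (\<lambda>\<psi>. P a \<psi>^4) + Ec (\<lambda>\<psi>. P b \<psi>^4) + 4 * Ec (\<lambda>\<psi>. P a \<psi>^2 * P b \<psi>^2)"
    by (subst Ec_add, (intro continuous_intros)+, subst Ec_add, (intro continuous_intros)+, simp add: Ec_cmult)
  finally show ?thesis by simp
qed

end

lemma P_swap: "P c (\<chi> i. \<psi> $ swp a b i) = P (swp a b c) \<psi>"
  by (simp add: P_def)

lemma swp_simps[simp]: "swp a b a = b" "swp a b b = a" "c \<noteq> a \<Longrightarrow> c \<noteq> b \<Longrightarrow> swp a b c = c"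
  by (auto simp: swp_def)

lemmas cont_simps = continuous_on_mult continuous_on_add continuous_on_diff continuous_on_power
  continuous_on_const cont_P continuous_on_id continuous_on_minus

context haar
begin

lemma P_W_other: "c \<noteq> a \<Longrightarrow> c \<noteq> b \<Longrightarrow> P c (Wv a b \<psi>) = P c \<psi>"
  by (simp add: P_def)

lemma P_W_sum: "a \<noteq> b \<Longrightarrow> P a (Wv a b \<psi>) + P b (Wv a b \<psi>) = P a \<psi> + P b \<psi>"
proof -
  assume ab: "a \<noteq> b"
  have "cnj (rr * (x + y)) * (rr * (x + y)) + cnj (rr * (x - y)) * (rr * (x - y)) = 2 * (rr * rr) * (cnj x * x + cnj y * y)" for x y
    by (simp add: algebra_simps)
  then show ?thesis using ab by (simp add: P_def rr2)
qed

definition dd :: complex where "dd = of_nat CARD('n)"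

lemma sumP_AE: "AE \<psi> in M. (\<Sum>r\<in>UNIV. P r \<psi>) = 1"
  using AEn
proof eventually_elim
  fix \<psi> :: "complex^'n" assume n: "norm \<psi> = 1"
  have "P r \<psi> = of_real ((cmod (\<psi>$r))^2)" for r
    unfolding P_def complex_norm_square by (simp add: mult.commute)
  then have "(\<Sum>r\<in>UNIV. P r \<psi>) = of_real (\<Sum>r\<in>UNIV. (cmod (\<psi>$r))^2)"
    by simp
  also have "(\<Sum>r\<in>UNIV. (cmod (\<psi>$r))^2) = (norm \<psi>)^2"
    by (simp add: norm_vec_def L2_set_def sum_nonneg)
  finally show "(\<Sum>r\<in>UNIV. P r \<psi>) = 1" using n by simp
qed

lemma Ec_sumP:
  assumes f: "continuous_on UNIV f"
  shows "(\<Sum>r\<in>UNIV. Ec (\<lambda>\<psi>. f \<psi> * P r \<psi>)) = Ec f"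
proof -
  have "(\<Sum>r\<in>UNIV. Ec (\<lambda>\<psi>. f \<psi> * P r \<psi>)) = Ec (\<lambda>\<psi>. \<Sum>r\<in>UNIV. f \<psi> * P r \<psi>)"
    by (rule Ec_sum[symmetric]) (intro continuous_intros f)
  also have "\<dots> = Ec (\<lambda>\<psi>. f \<psi> * (\<Sum>r\<in>UNIV. P r \<psi>))"
    by (simp add: sum_distrib_left)
  also have "\<dots> = Ec f"
    by (rule Ec_AE) (use sumP_AE in \<open>auto intro!: continuous_intros f\<close>)
  finally show ?thesis .
qed

lemma sum_split_const:
  assumes "\<And>r. r \<noteq> a \<Longrightarrow> g r = k"
  shows "(\<Sum>r\<in>(UNIV::'n set). g r) = g a + (dd - 1) * k"
proof -
  have "(\<Sum>r\<in>(UNIV::'n set). g r) = g a + (\<Sum>r\<in>UNIV - {a}. g r)"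
    by (simp add: sum.remove)
  also have "(\<Sum>r\<in>UNIV - {a}. g r) = (\<Sum>r\<in>UNIV - {a}. k)"
    using assms by (intro sum.cong) auto
  also have "\<dots> = (dd - 1) * k"
    by (simp add: dd_def card_Diff_singleton of_nat_diff)
  finally show ?thesis .
qed

lemma dd_pos: "dd \<noteq> 0" "dd + 1 \<noteq> 0" "dd + 2 \<noteq> 0" "dd + 3 \<noteq> 0"
proof -
  have "real CARD('n) > 0" by simp
  then show "dd \<noteq> 0" "dd + 1 \<noteq> 0" "dd + 2 \<noteq> 0" "dd + 3 \<noteq> 0"
    unfolding dd_def by (auto simp: complex_eq_iff)
qed

lemma m1: "Ec (P a) = 1 / dd"
proof -
  have sw: "Ec (P r) = Ec (P a)" for r
    using Ec_swap[of "P r" r a] by (simp add: P_swap continuous_intros cont_simps)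
  have "(\<Sum>r\<in>UNIV. Ec (\<lambda>\<psi>. 1 * P r \<psi>)) = Ec (\<lambda>\<psi>. 1)"
    by (rule Ec_sumP) simp
  moreover have "(\<Sum>r\<in>UNIV. Ec (\<lambda>\<psi>. 1 * P r \<psi>)) = (\<Sum>r\<in>(UNIV::'n set). Ec (P a))"
    using sw by (intro sum.cong) auto
  ultimately have "dd * Ec (P a) = 1" by (simp add: Ec_const dd_def)
  then show ?thesis using dd_pos by (simp add: field_simps)
qed

end

lemma solve_lin: "x * k = y \<Longrightarrow> k \<noteq> 0 \<Longrightarrow> x = y / (k::complex)"
  by (simp add: field_simps)

lemma lin_solve:
  fixes A R m D :: complex
  assumes "A + (D - 1) * (A / m) = R" "m \<noteq> 0" "m + D - 1 \<noteq> 0"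
  shows "A = m * R / (m + D - 1)"
proof -
  have "A * (m + D - 1) = m * (A + (D - 1) * (A / m))"
    using assms(2) by (simp add: field_simps)
  then have "A * (m + D - 1) = m * R" using assms(1) by simp
  then show ?thesis using assms(3) by (simp add: field_simps)
qed

context haar
begin

lemma m2:
  shows "Ec (\<lambda>\<psi>. P a \<psi>^2) = 2 / (dd * (dd + 1))"
    and "a \<noteq> b \<Longrightarrow> Ec (\<lambda>\<psi>. P a \<psi> * P b \<psi>) = 1 / (dd * (dd + 1))"
proof -
  define A where "A = Ec (\<lambda>\<psi>. P a \<psi>^2)"
  have B: "Ec (\<lambda>\<psi>. P a \<psi> * P b \<psi>) = A / 2" if ab: "a \<noteq> b" for b
  proof -
    have sw: "Ec (\<lambda>\<psi>. P b \<psi>^2) = A"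
      unfolding A_def using Ec_swap[of "\<lambda>\<psi>. P b \<psi>^2" a b] by (simp add: P_swap cont_simps)
    have "Ec (\<lambda>\<psi>. P a \<psi> * P b \<psi> * 1) = (Ec (\<lambda>\<psi>. P a \<psi>^2 * 1) + Ec (\<lambda>\<psi>. P b \<psi>^2 * 1)) / 4"
      by (rule K1[OF ab]) auto
    then show ?thesis using sw by (simp add: A_def)
  qed
  have "(\<Sum>r\<in>UNIV. Ec (\<lambda>\<psi>. P a \<psi> * P r \<psi>)) = Ec (P a)"
    by (rule Ec_sumP) (simp add: cont_simps)
  also have "(\<Sum>r\<in>UNIV. Ec (\<lambda>\<psi>. P a \<psi> * P r \<psi>)) = Ec (\<lambda>\<psi>. P a \<psi> * P a \<psi>) + (dd - 1) * (A / 2)"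
    by (rule sum_split_const) (use B in auto)
  also have "Ec (\<lambda>\<psi>. P a \<psi> * P a \<psi>) = A" by (simp add: A_def power2_eq_square)
  finally have "A + (dd - 1) * (A / 2) = 1 / dd" by (simp add: m1)
  then have "A = 2 * (1 / dd) / (2 + dd - 1)"
    by (rule lin_solve) (use dd_pos in \<open>auto simp: algebra_simps\<close>)
  then have A: "A = 2 / (dd * (dd + 1))"
    using dd_pos by (simp add: field_simps)
  then show "Ec (\<lambda>\<psi>. P a \<psi>^2) = 2 / (dd * (dd + 1))" by (simp add: A_def)
  show "a \<noteq> b \<Longrightarrow> Ec (\<lambda>\<psi>. P a \<psi> * P b \<psi>) = 1 / (dd * (dd + 1))"
    using B A by simp
qed


lemma m3:
  shows "Ec (\<lambda>\<psi>. P a \<psi>^3) = 6 / (dd * (dd + 1) * (dd + 2))"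
proof -
  define A where "A = Ec (\<lambda>\<psi>. P a \<psi>^3)"
  have B: "Ec (\<lambda>\<psi>. P a \<psi>^2 * P b \<psi>) = A / 3" if ab: "a \<noteq> b" for b
  proof -
    have swA: "Ec (\<lambda>\<psi>. P b \<psi>^3) = A"
      unfolding A_def using Ec_swap[of "\<lambda>\<psi>. P b \<psi>^3" a b] by (simp add: P_swap cont_simps)
    have swB: "Ec (\<lambda>\<psi>. P b \<psi>^2 * P a \<psi>) = Ec (\<lambda>\<psi>. P a \<psi>^2 * P b \<psi>)"
      using Ec_swap[of "\<lambda>\<psi>. P b \<psi>^2 * P a \<psi>" a b] by (simp add: P_swap cont_simps)
    have "Ec (\<lambda>\<psi>. P a \<psi> * P b \<psi> * (P a \<psi> + P b \<psi>)) = (Ec (\<lambda>\<psi>. P a \<psi>^2 * (P a \<psi> + P b \<psi>)) + Ec (\<lambda>\<psi>. P b \<psi>^2 * (P a \<psi> + P b \<psi>))) / 4"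
      by (rule K1[OF ab]) (auto simp: P_W_sum[OF ab] cont_simps)
    moreover have "Ec (\<lambda>\<psi>. P a \<psi> * P b \<psi> * (P a \<psi> + P b \<psi>)) = Ec (\<lambda>\<psi>. P a \<psi>^2 * P b \<psi>) + Ec (\<lambda>\<psi>. P b \<psi>^2 * P a \<psi>)"
      by (subst Ec_add[symmetric]) (auto simp: cont_simps power2_eq_square algebra_simps)
    moreover have "Ec (\<lambda>\<psi>. P a \<psi>^2 * (P a \<psi> + P b \<psi>)) = A + Ec (\<lambda>\<psi>. P a \<psi>^2 * P b \<psi>)"
      unfolding A_def by (subst Ec_add[symmetric]) (auto simp: cont_simps power2_eq_square power3_eq_cube algebra_simps)
    moreover have "Ec (\<lambda>\<psi>. P b \<psi>^2 * (P a \<psi> + P b \<psi>)) = Ec (\<lambda>\<psi>. P b \<psi>^2 * P a \<psi>) + A"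
      unfolding swA[symmetric] by (subst Ec_add[symmetric]) (auto simp: cont_simps power2_eq_square power3_eq_cube algebra_simps)
    ultimately show ?thesis unfolding swB by (simp add: field_simps)
  qed
  have "(\<Sum>r\<in>UNIV. Ec (\<lambda>\<psi>. P a \<psi>^2 * P r \<psi>)) = Ec (\<lambda>\<psi>. P a \<psi>^2)"
    by (rule Ec_sumP) (simp add: cont_simps)
  also have "(\<Sum>r\<in>UNIV. Ec (\<lambda>\<psi>. P a \<psi>^2 * P r \<psi>)) = Ec (\<lambda>\<psi>. P a \<psi>^2 * P a \<psi>) + (dd - 1) * (A / 3)"
    by (rule sum_split_const) (use B in auto)
  also have "Ec (\<lambda>\<psi>. P a \<psi>^2 * P a \<psi>) = A" by (simp add: A_def power2_eq_square power3_eq_cube)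
  finally have "A + (dd - 1) * (A / 3) = 2 / (dd * (dd + 1))" by (simp add: m2)
  then have "A = 3 * (2 / (dd * (dd + 1))) / (3 + dd - 1)"
    by (rule lin_solve) (use dd_pos in \<open>auto simp: algebra_simps\<close>)
  then show ?thesis
    using dd_pos by (simp add: field_simps A_def)
qed


lemma Ec_lin3:
  assumes "continuous_on UNIV f" "continuous_on UNIV g" "continuous_on UNIV h"
  shows "Ec (\<lambda>\<psi>. f \<psi> + c * g \<psi> + h \<psi>) = Ec f + c * Ec g + Ec h"
proof -
  have "Ec (\<lambda>\<psi>. f \<psi> + c * g \<psi> + h \<psi>) = Ec (\<lambda>\<psi>. f \<psi> + c * g \<psi>) + Ec h"
    by (rule Ec_add) (use assms in \<open>auto intro!: continuous_intros\<close>)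
  also have "Ec (\<lambda>\<psi>. f \<psi> + c * g \<psi>) = Ec f + Ec (\<lambda>\<psi>. c * g \<psi>)"
    by (rule Ec_add) (use assms in \<open>auto intro!: continuous_intros\<close>)
  finally show ?thesis by (simp add: Ec_cmult)
qed

definition NN :: complex where "NN = dd * (dd + 1) * (dd + 2) * (dd + 3)"

lemma NN_nz: "NN \<noteq> 0" using dd_pos by (simp add: NN_def)

lemma m4abc:
  shows "Ec (\<lambda>\<psi>. P a \<psi>^4) = 24 / NN"
    and "a \<noteq> b \<Longrightarrow> Ec (\<lambda>\<psi>. P a \<psi>^3 * P b \<psi>) = 6 / NN"
    and "a \<noteq> b \<Longrightarrow> Ec (\<lambda>\<psi>. P a \<psi>^2 * P b \<psi>^2) = 4 / NN"
proof -
  define A where "A = Ec (\<lambda>\<psi>. P a \<psi>^4)"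
  have BC: "Ec (\<lambda>\<psi>. P a \<psi>^3 * P b \<psi>) = A / 4 \<and> Ec (\<lambda>\<psi>. P a \<psi>^2 * P b \<psi>^2) = A / 6" if ab: "a \<noteq> b" for b
  proof -
    define B where "B = Ec (\<lambda>\<psi>. P a \<psi>^3 * P b \<psi>)"
    define C where "C = Ec (\<lambda>\<psi>. P a \<psi>^2 * P b \<psi>^2)"
    have swA: "Ec (\<lambda>\<psi>. P b \<psi>^4) = A"
      unfolding A_def using Ec_swap[of "\<lambda>\<psi>. P b \<psi>^4" a b] by (simp add: P_swap cont_simps)
    have swB: "Ec (\<lambda>\<psi>. P b \<psi>^3 * P a \<psi>) = B"
      unfolding B_def using Ec_swap[of "\<lambda>\<psi>. P b \<psi>^3 * P a \<psi>" a b] by (simp add: P_swap cont_simps)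
    have "C = (A + A + 4 * C) / 16"
      using K2[OF ab] unfolding swA A_def C_def .
    then have C: "C = A / 6" by (simp add: field_simps)
    have "Ec (\<lambda>\<psi>. P a \<psi> * P b \<psi> * (P a \<psi> + P b \<psi>)^2) = (Ec (\<lambda>\<psi>. P a \<psi>^2 * (P a \<psi> + P b \<psi>)^2) + Ec (\<lambda>\<psi>. P b \<psi>^2 * (P a \<psi> + P b \<psi>)^2)) / 4"
      by (rule K1[OF ab]) (auto simp: P_W_sum[OF ab] cont_simps)
    moreover have "Ec (\<lambda>\<psi>. P a \<psi> * P b \<psi> * (P a \<psi> + P b \<psi>)^2) = Ec (\<lambda>\<psi>. P a \<psi>^3 * P b \<psi> + 2 * (P a \<psi>^2 * P b \<psi>^2) + P b \<psi>^3 * P a \<psi>)"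
      by (intro arg_cong[where f=Ec] ext) (simp add: power2_eq_square power3_eq_cube algebra_simps)
    moreover have "Ec (\<lambda>\<psi>. P a \<psi>^2 * (P a \<psi> + P b \<psi>)^2) = Ec (\<lambda>\<psi>. P a \<psi>^4 + 2 * (P a \<psi>^3 * P b \<psi>) + P a \<psi>^2 * P b \<psi>^2)"
      by (intro arg_cong[where f=Ec] ext) (simp add: power2_eq_square power3_eq_cube power4_eq_xxxx algebra_simps)
    moreover have "Ec (\<lambda>\<psi>. P b \<psi>^2 * (P a \<psi> + P b \<psi>)^2) = Ec (\<lambda>\<psi>. P a \<psi>^2 * P b \<psi>^2 + 2 * (P b \<psi>^3 * P a \<psi>) + P b \<psi>^4)"
      by (intro arg_cong[where f=Ec] ext) (simp add: power2_eq_square power3_eq_cube power4_eq_xxxx algebra_simps)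
    ultimately have "B + 2 * C + B = (A + 2 * B + C + (C + 2 * B + A)) / 4"
      by (simp add: Ec_lin3 cont_simps swA swB A_def[symmetric] B_def[symmetric] C_def[symmetric])
    then have "B = A / 4" using C by (simp add: field_simps)
    then show ?thesis using C by (simp add: B_def C_def)
  qed
  have "(\<Sum>r\<in>UNIV. Ec (\<lambda>\<psi>. P a \<psi>^3 * P r \<psi>)) = Ec (\<lambda>\<psi>. P a \<psi>^3)"
    by (rule Ec_sumP) (simp add: cont_simps)
  also have "(\<Sum>r\<in>UNIV. Ec (\<lambda>\<psi>. P a \<psi>^3 * P r \<psi>)) = Ec (\<lambda>\<psi>. P a \<psi>^3 * P a \<psi>) + (dd - 1) * (A / 4)"
    by (rule sum_split_const) (use BC in auto)
  also have "Ec (\<lambda>\<psi>. P a \<psi>^3 * P a \<psi>) = A" by (simp add: A_def power3_eq_cube power4_eq_xxxx)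
  finally have "A + (dd - 1) * (A / 4) = 6 / (dd * (dd + 1) * (dd + 2))" by (simp add: m3)
  then have "A = 4 * (6 / (dd * (dd + 1) * (dd + 2))) / (4 + dd - 1)"
    by (rule lin_solve) (use dd_pos in \<open>auto simp: algebra_simps\<close>)
  then have A: "A = 24 / NN"
    using dd_pos by (simp add: field_simps NN_def)
  then show "Ec (\<lambda>\<psi>. P a \<psi>^4) = 24 / NN" by (simp add: A_def)
  show "a \<noteq> b \<Longrightarrow> Ec (\<lambda>\<psi>. P a \<psi>^3 * P b \<psi>) = 6 / NN"
    using BC A by simp
  show "a \<noteq> b \<Longrightarrow> Ec (\<lambda>\<psi>. P a \<psi>^2 * P b \<psi>^2) = 4 / NN"
    using BC A by simp
qed

lemma m4e:
  assumes "a \<noteq> b" "a \<noteq> c" "b \<noteq> c"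
  shows "Ec (\<lambda>\<psi>. P a \<psi>^2 * P b \<psi> * P c \<psi>) = 2 / NN"
proof -
  have "Ec (\<lambda>\<psi>. P a \<psi>^2 * P b \<psi> * P c \<psi>) = Ec (\<lambda>\<psi>. P b \<psi> * P c \<psi> * P a \<psi>^2)"
    by (simp add: ac_simps)
  also have "Ec (\<lambda>\<psi>. P b \<psi> * P c \<psi> * P a \<psi>^2) = (Ec (\<lambda>\<psi>. P b \<psi>^2 * P a \<psi>^2) + Ec (\<lambda>\<psi>. P c \<psi>^2 * P a \<psi>^2)) / 4"
    by (rule K1) (use assms in \<open>auto simp: P_W_other cont_simps\<close>)
  also have "Ec (\<lambda>\<psi>. P b \<psi>^2 * P a \<psi>^2) = 4 / NN" using m4abc(3)[of b a] assms by simp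
  also have "Ec (\<lambda>\<psi>. P c \<psi>^2 * P a \<psi>^2) = 4 / NN" using m4abc(3)[of c a] assms by simp
  finally show ?thesis by simp
qed

lemma m4g:
  assumes "a \<noteq> b" "a \<noteq> c" "a \<noteq> e" "b \<noteq> c" "b \<noteq> e" "c \<noteq> e"
  shows "Ec (\<lambda>\<psi>. P a \<psi> * P b \<psi> * P c \<psi> * P e \<psi>) = 1 / NN"
proof -
  have "Ec (\<lambda>\<psi>. P a \<psi> * P b \<psi> * (P c \<psi> * P e \<psi>)) = (Ec (\<lambda>\<psi>. P a \<psi>^2 * (P c \<psi> * P e \<psi>)) + Ec (\<lambda>\<psi>. P b \<psi>^2 * (P c \<psi> * P e \<psi>))) / 4"
    by (rule K1) (use assms in \<open>auto simp: P_W_other cont_simps\<close>)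
  also have "Ec (\<lambda>\<psi>. P a \<psi>^2 * (P c \<psi> * P e \<psi>)) = 2 / NN" using m4e[of a c e] assms by (simp add: mult.assoc)
  also have "Ec (\<lambda>\<psi>. P b \<psi>^2 * (P c \<psi> * P e \<psi>)) = 2 / NN" using m4e[of b c e] assms by (simp add: mult.assoc)
  finally show ?thesis by (simp add: mult.assoc)
qed

end

definition W :: "'n list \<Rightarrow> 'n list \<Rightarrow> complex" where
  "W I J = (\<Sum>\<pi>\<in>{\<pi>. \<pi> permutes {..<length I}}. \<Prod>k<length I. if I!k = J!(\<pi> k) then 1 else 0)"

lemma W_nz_mset:
  assumes len: "length J = length I" and nz: "W I J \<noteq> 0"
  shows "mset I = mset J"
proof -
  obtain \<pi> where \<pi>: "\<pi> permutes {..<length I}" and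
    t: "(\<Prod>k<length I. if I!k = J!(\<pi> k) then 1 else 0) \<noteq> (0::complex)"
    using nz unfolding W_def by (metis (no_types, lifting) mem_Collect_eq sum.not_neutral_contains_not_neutral)
  have eq: "I!k = J!(\<pi> k)" if k: "k < length I" for k
  proof (rule ccontr)
    assume "I!k \<noteq> J!(\<pi> k)"
    then have "(\<Prod>k<length I. if I!k = J!(\<pi> k) then 1 else 0) = (0::complex)"
      using k by (intro prod_zero) auto
    then show False using t by simp
  qed
  have "I = permute_list \<pi> J"
  proof (rule nth_equalityI)
    show "length I = length (permute_list \<pi> J)" using len by simp
    fix k assume "k < length I"
    then show "I ! k = permute_list \<pi> J ! k"
    proof -
      have "permute_list \<pi> J ! k = J ! \<pi> k"
        using \<pi> len \<open>k < length I\<close> by (intro permute_list_nth) simp_all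
      then show ?thesis using eq[OF \<open>k < length I\<close>] by simp
    qed
  qed
  moreover have "mset (permute_list \<pi> J) = mset J"
    using \<pi> len by (intro mset_permute_list) simp
  ultimately show ?thesis by simp
qed

lemma W_mset_eq:
  assumes "mset I = mset J"
  shows "W I J = W I I"
proof -
  obtain p where p: "p permutes {..<length I}" and J: "permute_list p I = J"
    using mset_eq_permutation[of J I, OF assms[symmetric]] by blast
  have len: "length J = length I" using J by auto
  have "W I J = (\<Sum>\<pi>\<in>{\<pi>. \<pi> permutes {..<length I}}. \<Prod>k<length I. if I!k = I!((p \<circ> \<pi>) k) then 1 else 0)"
    unfolding W_def
  proof (intro sum.cong refl prod.cong)
    fix \<pi> k assume \<pi>: "\<pi> \<in> {\<pi>. \<pi> permutes {..<length I}}" and k: "k \<in> {..<length I}"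
    have "\<pi> k \<in> {..<length I}" using \<pi> k permutes_in_image[of \<pi> "{..<length I}" k] by simp
    then have "\<pi> k < length I" by simp
    then have "J ! \<pi> k = I ! p (\<pi> k)"
      using permute_list_nth[OF p, of "\<pi> k"] J by simp
    then show "(if I ! k = J ! \<pi> k then 1 else 0) = (if I ! k = I ! (p \<circ> \<pi>) k then 1 else (0::complex))"
      by simp
  qed
  also have "\<dots> = W I I"
    unfolding W_def by (rule setum_permutations_compose_left[OF p, symmetric])
  finally show ?thesis .
qed

lemma W2_explicit: "W [a,b] [c,e] = (if a = c then 1 else 0) * (if b = e then 1 else 0) + (if a = e then 1 else 0) * (if b = c then 1 else 0)"
proof -
  have U: "{..<length [a,b]} = insert 0 (insert 1 {})" by auto
  show ?thesis
    unfolding W_def U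
    by (simp add: sum_over_permutations_insert permutes_sing transpose_def lessThan_Suc)
qed


definition dl :: "'n \<Rightarrow> 'n \<Rightarrow> complex" where "dl x y = (if x = y then 1 else 0)"

lemma W4_explicit: "W [a,b,c,e] [f,g,h,k] =
    dl a f * dl b g * dl c h * dl e k +
    dl a f * dl b g * dl c k * dl e h +
    dl a f * dl b h * dl c g * dl e k +
    dl a f * dl b h * dl c k * dl e g +
    dl a f * dl b k * dl c g * dl e h +
    dl a f * dl b k * dl c h * dl e g +
    dl a g * dl b f * dl c h * dl e k +
    dl a g * dl b f * dl c k * dl e h +
    dl a g * dl b h * dl c f * dl e k +
    dl a g * dl b h * dl c k * dl e f +
    dl a g * dl b k * dl c f * dl e h +
    dl a g * dl b k * dl c h * dl e f +
    dl a h * dl b f * dl c g * dl e k +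
    dl a h * dl b f * dl c k * dl e g +
    dl a h * dl b g * dl c f * dl e k +
    dl a h * dl b g * dl c k * dl e f +
    dl a h * dl b k * dl c f * dl e g +
    dl a h * dl b k * dl c g * dl e f +
    dl a k * dl b f * dl c g * dl e h +
    dl a k * dl b f * dl c h * dl e g +
    dl a k * dl b g * dl c f * dl e h +
    dl a k * dl b g * dl c h * dl e f +
    dl a k * dl b h * dl c f * dl e g +
    dl a k * dl b h * dl c g * dl e f"
proof -
  have U: "{..<length [a,b,c,e]} = insert 0 (insert 1 (insert 2 (insert 3 {})))" by auto
  show ?thesis
    unfolding W_def U
    by (simp add: sum_over_permutations_insert permutes_sing transpose_def lessThan_Suc dl_def[symmetric] ac_simps)
qed

definition monoI :: "'n list \<Rightarrow> 'n list \<Rightarrow> complex^'n \<Rightarrow> complex" where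
  "monoI I J \<psi> = prod_list (map (\<lambda>r. cnj (\<psi>$r)) I) * prod_list (map (\<lambda>r. \<psi>$r) J)"

lemma cont_prod_list[continuous_intros]:
  fixes g :: "'a \<Rightarrow> 'b::topological_space \<Rightarrow> complex"
  shows "(\<And>x. continuous_on S (g x)) \<Longrightarrow> continuous_on S (\<lambda>\<psi>. prod_list (map (\<lambda>x. g x \<psi>) xs))"
  by (induction xs) (auto intro!: continuous_intros)

lemma cont_monoI[continuous_intros]: "continuous_on UNIV (monoI I J)"
  unfolding monoI_def by (intro continuous_intros)

lemma prod_list_phase:
  fixes \<psi> :: "complex^'n"
  shows "prod_list (map (\<lambda>s. (\<chi> i. if i = r then c * \<psi>$i else \<psi>$i) $ s) J) = c ^ count (mset J) r * prod_list (map (\<lambda>s. \<psi>$s) J)"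
  by (induction J) (auto simp: mult.assoc mult.left_commute)

lemma prod_list_phase_cnj:
  fixes \<psi> :: "complex^'n"
  shows "prod_list (map (\<lambda>s. cnj ((\<chi> i. if i = r then c * \<psi>$i else \<psi>$i) $ s)) J) = cnj c ^ count (mset J) r * prod_list (map (\<lambda>s. cnj (\<psi>$s)) J)"
  by (induction J) (auto simp: mult.assoc mult.left_commute)

lemma monoI_mset:
  assumes "mset I = mset J"
  shows "monoI I J \<psi> = prod_list (map (\<lambda>r. P r \<psi>) I)"
proof -
  have "prod_list (map (\<lambda>r. \<psi>$r) J) = prod_list (map (\<lambda>r. \<psi>$r) I)"
  proof -
    have "prod_list (map (\<lambda>r. \<psi>$r) J) = prod_mset (image_mset (\<lambda>r. \<psi>$r) (mset J))"
      by (simp add: prod_mset_prod_list[symmetric])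
    also have "\<dots> = prod_list (map (\<lambda>r. \<psi>$r) I)"
      by (simp add: prod_mset_prod_list[symmetric] assms)
    finally show ?thesis .
  qed
  moreover have "prod_list (map f I) * prod_list (map g I) = prod_list (map (\<lambda>r. f r * g r) I)" for f g :: "_ \<Rightarrow> complex"
    by (induction I) (auto simp: ac_simps)
  ultimately show ?thesis unfolding monoI_def P_def by simp
qed

lemma cis_ne_1:
  fixes k :: int and L :: nat
  assumes "k \<noteq> 0" "\<bar>k\<bar> \<le> int L"
  shows "cis (real_of_int k * (2 * pi / (real L + 1))) \<noteq> 1"
proof
  assume "cis (real_of_int k * (2 * pi / (real L + 1))) = 1"
  then have "cos (real_of_int k * (2 * pi / (real L + 1))) = 1"
    by (simp add: complex_eq_iff)
  then obtain n :: int where n: "real_of_int k * (2 * pi / (real L + 1)) = real_of_int n * 2 * pi"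
    by (auto simp: cos_one_2pi_int)
  then have "2 * pi * real_of_int k = 2 * pi * (real_of_int n * (real L + 1))"
    by (simp add: field_simps)
  then have "real_of_int k = real_of_int n * (real L + 1)"
    using pi_gt_zero by simp
  then have "real_of_int k = real_of_int (n * (int L + 1))" by simp
  then have k: "k = n * (int L + 1)" by (simp only: of_int_eq_iff)
  then have "n \<noteq> 0" using assms by auto
  then have n1: "\<bar>n\<bar> \<ge> 1" by simp
  have "\<bar>k\<bar> = \<bar>n\<bar> * (int L + 1)" unfolding k abs_mult by simp
  also have "\<dots> \<ge> 1 * (int L + 1)" by (rule mult_right_mono[OF n1]) simp
  finally have "\<bar>k\<bar> \<ge> int L + 1" by simp
  then show False using assms by simp
qed

context haar
begin

lemma M1:
  assumes len: "length J = length I" and ne: "mset I \<noteq> mset J"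
  shows "Ec (monoI I J) = 0"
proof -
  have "\<exists>r. count (mset I) r \<noteq> count (mset J) r"
  proof (rule ccontr)
    assume "\<not> (\<exists>r. count (mset I) r \<noteq> count (mset J) r)"
    then have "mset I = mset J" by (intro multiset_eqI) simp
    with ne show False ..
  qed
  then obtain r where r: "count (mset I) r \<noteq> count (mset J) r" by blast
  define L where "L = length I"
  define \<theta> where "\<theta> = 2 * pi / (real L + 1)"
  define c where "c = cis \<theta>"
  define nI nJ where "nI = count (mset I) r" and "nJ = count (mset J) r"
  have c: "cnj c * c = 1" unfolding c_def cis_cnj cis_mult by simp
  have nI: "nI \<le> L" unfolding nI_def L_def using count_le_size[of "mset I" r] by simp
  have nJ: "nJ \<le> L" unfolding nJ_def L_def using count_le_size[of "mset J" r] len by simp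
  have w: "cnj c ^ nI * c ^ nJ = cis (real_of_int (int nJ - int nI) * \<theta>)"
  proof -
    have "cnj c ^ nI * c ^ nJ = cis (real nI * (- \<theta>) + real nJ * \<theta>)"
    proof -
      have dm: "cis x ^ n = cis (real n * x)" for x n
        by (induct n) (simp_all add: algebra_simps cis_mult)
      show ?thesis by (simp only: c_def cis_cnj dm cis_mult)
    qed
    also have "real nI * (- \<theta>) + real nJ * \<theta> = real_of_int (int nJ - int nI) * \<theta>"
      by (simp add: algebra_simps)
    finally show ?thesis .
  qed
  show ?thesis
  proof (rule Ec_phase0[OF c cont_monoI, where a=r and w="cnj c ^ nI * c ^ nJ"])
    show "monoI I J (\<chi> i. if i = r then c * \<psi> $ i else \<psi> $ i) = cnj c ^ nI * c ^ nJ * monoI I J \<psi>" for \<psi>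
      unfolding monoI_def prod_list_phase prod_list_phase_cnj nI_def nJ_def by (simp add: ac_simps)
    show "cnj c ^ nI * c ^ nJ \<noteq> 1"
      unfolding w \<theta>_def
      by (rule cis_ne_1) (use r nI nJ in \<open>auto simp: nI_def nJ_def\<close>)
  qed
qed

end

context haar
begin

lemma v4_1: "Ec (\<lambda>\<psi>. P x \<psi> * (P x \<psi> * (P x \<psi> * P x \<psi>))) = W [x,x,x,x] [x,x,x,x] / NN"
proof -
  have "Ec (\<lambda>\<psi>. P x \<psi> * (P x \<psi> * (P x \<psi> * P x \<psi>))) = Ec (\<lambda>\<psi>. P x \<psi>^4)"
    by (intro arg_cong[where f=Ec] ext) (simp add: power2_eq_square power3_eq_cube power4_eq_xxxx ac_simps)
  also have "\<dots> = 24 / NN" by (rule m4abc(1))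
  also have "24 = W [x,x,x,x] [x,x,x,x]" by (simp add: W4_explicit dl_def)
  finally show ?thesis .
qed

lemma v4_2:
  assumes "x \<noteq> y"
  shows "Ec (\<lambda>\<psi>. P x \<psi> * (P y \<psi> * (P y \<psi> * P y \<psi>))) = W [x,y,y,y] [x,y,y,y] / NN"
proof -
  have "Ec (\<lambda>\<psi>. P x \<psi> * (P y \<psi> * (P y \<psi> * P y \<psi>))) = Ec (\<lambda>\<psi>. P y \<psi>^3 * P x \<psi>)"
    by (intro arg_cong[where f=Ec] ext) (simp add: power2_eq_square power3_eq_cube power4_eq_xxxx ac_simps)
  also have "\<dots> = 6 / NN" using assms by (intro m4abc(2)) auto
  also have "6 = W [x,y,y,y] [x,y,y,y]" using assms by (auto simp: W4_explicit dl_def)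
  finally show ?thesis .
qed

lemma v4_3:
  assumes "x \<noteq> y"
  shows "Ec (\<lambda>\<psi>. P x \<psi> * (P x \<psi> * (P y \<psi> * P y \<psi>))) = W [x,x,y,y] [x,x,y,y] / NN"
proof -
  have "Ec (\<lambda>\<psi>. P x \<psi> * (P x \<psi> * (P y \<psi> * P y \<psi>))) = Ec (\<lambda>\<psi>. P x \<psi>^2 * P y \<psi>^2)"
    by (intro arg_cong[where f=Ec] ext) (simp add: power2_eq_square power3_eq_cube power4_eq_xxxx ac_simps)
  also have "\<dots> = 4 / NN" using assms by (intro m4abc(3)) auto
  also have "4 = W [x,x,y,y] [x,x,y,y]" using assms by (auto simp: W4_explicit dl_def)
  finally show ?thesis .
qed

lemma v4_4:
  assumes "x \<noteq> y"
  shows "Ec (\<lambda>\<psi>. P x \<psi> * (P y \<psi> * (P x \<psi> * P x \<psi>))) = W [x,y,x,x] [x,y,x,x] / NN"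
proof -
  have "Ec (\<lambda>\<psi>. P x \<psi> * (P y \<psi> * (P x \<psi> * P x \<psi>))) = Ec (\<lambda>\<psi>. P x \<psi>^3 * P y \<psi>)"
    by (intro arg_cong[where f=Ec] ext) (simp add: power2_eq_square power3_eq_cube power4_eq_xxxx ac_simps)
  also have "\<dots> = 6 / NN" using assms by (intro m4abc(2)) auto
  also have "6 = W [x,y,x,x] [x,y,x,x]" using assms by (auto simp: W4_explicit dl_def)
  finally show ?thesis .
qed

lemma v4_5:
  assumes "x \<noteq> y" and "x \<noteq> z" and "y \<noteq> z"
  shows "Ec (\<lambda>\<psi>. P x \<psi> * (P y \<psi> * (P z \<psi> * P z \<psi>))) = W [x,y,z,z] [x,y,z,z] / NN"
proof -
  have "Ec (\<lambda>\<psi>. P x \<psi> * (P y \<psi> * (P z \<psi> * P z \<psi>))) = Ec (\<lambda>\<psi>. P z \<psi>^2 * P x \<psi> * P y \<psi>)"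
    by (intro arg_cong[where f=Ec] ext) (simp add: power2_eq_square power3_eq_cube power4_eq_xxxx ac_simps)
  also have "\<dots> = 2 / NN" using assms by (intro m4e) auto
  also have "2 = W [x,y,z,z] [x,y,z,z]" using assms by (auto simp: W4_explicit dl_def)
  finally show ?thesis .
qed

lemma v4_6:
  assumes "x \<noteq> y"
  shows "Ec (\<lambda>\<psi>. P x \<psi> * (P x \<psi> * (P x \<psi> * P y \<psi>))) = W [x,x,x,y] [x,x,x,y] / NN"
proof -
  have "Ec (\<lambda>\<psi>. P x \<psi> * (P x \<psi> * (P x \<psi> * P y \<psi>))) = Ec (\<lambda>\<psi>. P x \<psi>^3 * P y \<psi>)"
    by (intro arg_cong[where f=Ec] ext) (simp add: power2_eq_square power3_eq_cube power4_eq_xxxx ac_simps)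
  also have "\<dots> = 6 / NN" using assms by (intro m4abc(2)) auto
  also have "6 = W [x,x,x,y] [x,x,x,y]" using assms by (auto simp: W4_explicit dl_def)
  finally show ?thesis .
qed

lemma v4_7:
  assumes "x \<noteq> y"
  shows "Ec (\<lambda>\<psi>. P x \<psi> * (P y \<psi> * (P y \<psi> * P x \<psi>))) = W [x,y,y,x] [x,y,y,x] / NN"
proof -
  have "Ec (\<lambda>\<psi>. P x \<psi> * (P y \<psi> * (P y \<psi> * P x \<psi>))) = Ec (\<lambda>\<psi>. P x \<psi>^2 * P y \<psi>^2)"
    by (intro arg_cong[where f=Ec] ext) (simp add: power2_eq_square power3_eq_cube power4_eq_xxxx ac_simps)
  also have "\<dots> = 4 / NN" using assms by (intro m4abc(3)) auto
  also have "4 = W [x,y,y,x] [x,y,y,x]" using assms by (auto simp: W4_explicit dl_def)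
  finally show ?thesis .
qed

lemma v4_8:
  assumes "x \<noteq> y" and "x \<noteq> z" and "y \<noteq> z"
  shows "Ec (\<lambda>\<psi>. P x \<psi> * (P y \<psi> * (P y \<psi> * P z \<psi>))) = W [x,y,y,z] [x,y,y,z] / NN"
proof -
  have "Ec (\<lambda>\<psi>. P x \<psi> * (P y \<psi> * (P y \<psi> * P z \<psi>))) = Ec (\<lambda>\<psi>. P y \<psi>^2 * P x \<psi> * P z \<psi>)"
    by (intro arg_cong[where f=Ec] ext) (simp add: power2_eq_square power3_eq_cube power4_eq_xxxx ac_simps)
  also have "\<dots> = 2 / NN" using assms by (intro m4e) auto
  also have "2 = W [x,y,y,z] [x,y,y,z]" using assms by (auto simp: W4_explicit dl_def)
  finally show ?thesis .
qed

lemma v4_9: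
  assumes "x \<noteq> y"
  shows "Ec (\<lambda>\<psi>. P x \<psi> * (P y \<psi> * (P x \<psi> * P y \<psi>))) = W [x,y,x,y] [x,y,x,y] / NN"
proof -
  have "Ec (\<lambda>\<psi>. P x \<psi> * (P y \<psi> * (P x \<psi> * P y \<psi>))) = Ec (\<lambda>\<psi>. P x \<psi>^2 * P y \<psi>^2)"
    by (intro arg_cong[where f=Ec] ext) (simp add: power2_eq_square power3_eq_cube power4_eq_xxxx ac_simps)
  also have "\<dots> = 4 / NN" using assms by (intro m4abc(3)) auto
  also have "4 = W [x,y,x,y] [x,y,x,y]" using assms by (auto simp: W4_explicit dl_def)
  finally show ?thesis .
qed

lemma v4_10:
  assumes "x \<noteq> y"
  shows "Ec (\<lambda>\<psi>. P x \<psi> * (P x \<psi> * (P y \<psi> * P x \<psi>))) = W [x,x,y,x] [x,x,y,x] / NN"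
proof -
  have "Ec (\<lambda>\<psi>. P x \<psi> * (P x \<psi> * (P y \<psi> * P x \<psi>))) = Ec (\<lambda>\<psi>. P x \<psi>^3 * P y \<psi>)"
    by (intro arg_cong[where f=Ec] ext) (simp add: power2_eq_square power3_eq_cube power4_eq_xxxx ac_simps)
  also have "\<dots> = 6 / NN" using assms by (intro m4abc(2)) auto
  also have "6 = W [x,x,y,x] [x,x,y,x]" using assms by (auto simp: W4_explicit dl_def)
  finally show ?thesis .
qed

lemma v4_11:
  assumes "x \<noteq> y" and "x \<noteq> z" and "y \<noteq> z"
  shows "Ec (\<lambda>\<psi>. P x \<psi> * (P y \<psi> * (P z \<psi> * P y \<psi>))) = W [x,y,z,y] [x,y,z,y] / NN"
proof -
  have "Ec (\<lambda>\<psi>. P x \<psi> * (P y \<psi> * (P z \<psi> * P y \<psi>))) = Ec (\<lambda>\<psi>. P y \<psi>^2 * P x \<psi> * P z \<psi>)"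
    by (intro arg_cong[where f=Ec] ext) (simp add: power2_eq_square power3_eq_cube power4_eq_xxxx ac_simps)
  also have "\<dots> = 2 / NN" using assms by (intro m4e) auto
  also have "2 = W [x,y,z,y] [x,y,z,y]" using assms by (auto simp: W4_explicit dl_def)
  finally show ?thesis .
qed

lemma v4_12:
  assumes "x \<noteq> y" and "x \<noteq> z" and "y \<noteq> z"
  shows "Ec (\<lambda>\<psi>. P x \<psi> * (P x \<psi> * (P y \<psi> * P z \<psi>))) = W [x,x,y,z] [x,x,y,z] / NN"
proof -
  have "Ec (\<lambda>\<psi>. P x \<psi> * (P x \<psi> * (P y \<psi> * P z \<psi>))) = Ec (\<lambda>\<psi>. P x \<psi>^2 * P y \<psi> * P z \<psi>)"
    by (intro arg_cong[where f=Ec] ext) (simp add: power2_eq_square power3_eq_cube power4_eq_xxxx ac_simps)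
  also have "\<dots> = 2 / NN" using assms by (intro m4e) auto
  also have "2 = W [x,x,y,z] [x,x,y,z]" using assms by (auto simp: W4_explicit dl_def)
  finally show ?thesis .
qed

lemma v4_13:
  assumes "x \<noteq> y" and "x \<noteq> z" and "y \<noteq> z"
  shows "Ec (\<lambda>\<psi>. P x \<psi> * (P y \<psi> * (P x \<psi> * P z \<psi>))) = W [x,y,x,z] [x,y,x,z] / NN"
proof -
  have "Ec (\<lambda>\<psi>. P x \<psi> * (P y \<psi> * (P x \<psi> * P z \<psi>))) = Ec (\<lambda>\<psi>. P x \<psi>^2 * P y \<psi> * P z \<psi>)"
    by (intro arg_cong[where f=Ec] ext) (simp add: power2_eq_square power3_eq_cube power4_eq_xxxx ac_simps)
  also have "\<dots> = 2 / NN" using assms by (intro m4e) auto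
  also have "2 = W [x,y,x,z] [x,y,x,z]" using assms by (auto simp: W4_explicit dl_def)
  finally show ?thesis .
qed

lemma v4_14:
  assumes "x \<noteq> y" and "x \<noteq> z" and "y \<noteq> z"
  shows "Ec (\<lambda>\<psi>. P x \<psi> * (P y \<psi> * (P z \<psi> * P x \<psi>))) = W [x,y,z,x] [x,y,z,x] / NN"
proof -
  have "Ec (\<lambda>\<psi>. P x \<psi> * (P y \<psi> * (P z \<psi> * P x \<psi>))) = Ec (\<lambda>\<psi>. P x \<psi>^2 * P y \<psi> * P z \<psi>)"
    by (intro arg_cong[where f=Ec] ext) (simp add: power2_eq_square power3_eq_cube power4_eq_xxxx ac_simps)
  also have "\<dots> = 2 / NN" using assms by (intro m4e) auto
  also have "2 = W [x,y,z,x] [x,y,z,x]" using assms by (auto simp: W4_explicit dl_def)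
  finally show ?thesis .
qed

lemma v4_15:
  assumes "x \<noteq> y" and "x \<noteq> z" and "x \<noteq> w" and "y \<noteq> z" and "y \<noteq> w" and "z \<noteq> w"
  shows "Ec (\<lambda>\<psi>. P x \<psi> * (P y \<psi> * (P z \<psi> * P w \<psi>))) = W [x,y,z,w] [x,y,z,w] / NN"
proof -
  have "Ec (\<lambda>\<psi>. P x \<psi> * (P y \<psi> * (P z \<psi> * P w \<psi>))) = Ec (\<lambda>\<psi>. P x \<psi> * P y \<psi> * P z \<psi> * P w \<psi>)"
    by (intro arg_cong[where f=Ec] ext) (simp add: power2_eq_square power3_eq_cube power4_eq_xxxx ac_simps)
  also have "\<dots> = 1 / NN" using assms by (intro m4g) auto
  also have "1 = W [x,y,z,w] [x,y,z,w]" using assms by (auto simp: W4_explicit dl_def)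
  finally show ?thesis .
qed

lemma v4: "Ec (\<lambda>\<psi>. P a \<psi> * (P b \<psi> * (P c \<psi> * P e \<psi>))) = W [a,b,c,e] [a,b,c,e] / NN"
  by (cases "a = b"; cases "a = c"; cases "a = e"; cases "b = c"; cases "b = e"; cases "c = e")
    (simp_all add: v4_1 v4_2 v4_3 v4_4 v4_5 v4_6 v4_7 v4_8 v4_9 v4_10 v4_11 v4_12 v4_13 v4_14 v4_15)

end

lemma dl_simps[simp]: "dl a a = 1" "a \<noteq> b \<Longrightarrow> dl a b = 0"
  by (auto simp: dl_def)

context haar
begin

lemma v2: "Ec (\<lambda>\<psi>. P a \<psi> * P b \<psi>) = W [a,b] [a,b] / (dd * (dd + 1))"
proof (cases "a = b")
  case True
  then show ?thesis using m2(1)[of a] by (simp add: W2_explicit power2_eq_square)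
next
  case False
  then show ?thesis using m2(2)[of a b] by (simp add: W2_explicit)
qed

lemma mom_gen:
  assumes len: "length J = length I"
    and val: "Ec (\<lambda>\<psi>. prod_list (map (\<lambda>r. P r \<psi>) I)) = W I I / D"
  shows "Ec (monoI I J) = W I J / D"
proof (cases "mset I = mset J")
  case True
  have "Ec (monoI I J) = Ec (\<lambda>\<psi>. prod_list (map (\<lambda>r. P r \<psi>) I))"
    using monoI_mset[OF True] by (intro arg_cong[where f=Ec] ext) simp
  then show ?thesis using val W_mset_eq[OF True] by simp
next
  case False
  then have "W I J = 0" using W_nz_mset[OF len] by blast
  then show ?thesis using M1[OF len False] by simp
qed

lemma mom2: "Ec (monoI [a,b] [c,e]) = W [a,b] [c,e] / (dd * (dd + 1))"
  by (rule mom_gen) (use v2 in simp_all)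

lemma mom4: "Ec (monoI [a,b,c,e] [f,g,h,k]) = W [a,b,c,e] [f,g,h,k] / NN"
  by (rule mom_gen) (use v4 in simp_all)

end

lemma if_mult_0: "(if Q then x else 0) * y = (if Q then x * y else (0::complex))"
  "y * (if Q then x else 0) = (if Q then y * x else (0::complex))"
  by auto

lemma sum_if_lift: "(\<Sum>x\<in>A. if Q then f x else 0) = (if Q then (\<Sum>x\<in>A. f x) else (0::complex))"
  by auto

lemmas delta_simps = dl_def if_mult_0 sum_if_lift sum.delta sum.delta' mult_1_left mult_1_right

lemma unitary_sums:
  fixes X :: "complex^'n^'n"
  assumes "unitary_cmat X"
  shows "(\<Sum>j\<in>UNIV. X$i$j * cnj (X$k$j)) = (if i = k then 1 else 0)"
    and "(\<Sum>j\<in>UNIV. cnj (X$j$i) * X$j$k) = (if i = k then 1 else 0)"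
proof -
  have "(X ** cmat_adj X) $ i $ k = mat 1 $ i $ k" "(cmat_adj X ** X) $ i $ k = mat 1 $ i $ k"
    using assms unfolding unitary_cmat_def by simp_all
  then show "(\<Sum>j\<in>UNIV. X$i$j * cnj (X$k$j)) = (if i = k then 1 else 0)"
    and "(\<Sum>j\<in>UNIV. cnj (X$j$i) * X$j$k) = (if i = k then 1 else 0)"
    by (simp_all add: matrix_matrix_mult_def cmat_adj_def mat_def)
qed

lemma braket_expand: "braket \<psi> X = (\<Sum>i\<in>UNIV. \<Sum>j\<in>UNIV. X$i$j * (cnj (\<psi>$i) * \<psi>$j))"
  by (simp add: braket_def matrix_vector_mult_def sum_distrib_left ac_simps)

lemma hh_expand: "braket \<psi> X * cnj (braket \<psi> X) =
   (\<Sum>i\<in>UNIV. \<Sum>j\<in>UNIV. \<Sum>k\<in>UNIV. \<Sum>l\<in>UNIV. (X$i$j * cnj (X$k$l)) * monoI [i,l] [j,k] \<psi>)"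
proof -
  have 1: "(\<Sum>i\<in>A. \<Sum>j\<in>B. f i j) * G = (\<Sum>i\<in>A. \<Sum>j\<in>B. f i j * G)" for A B f and G :: complex
    by (simp add: sum_distrib_right)
  have 2: "F * (\<Sum>k\<in>C. \<Sum>l\<in>D. g k l) = (\<Sum>k\<in>C. \<Sum>l\<in>D. F * g k l)" for C D g and F :: complex
    by (simp add: sum_distrib_left)
  have c: "cnj (braket \<psi> X) = (\<Sum>k\<in>UNIV. \<Sum>l\<in>UNIV. cnj (X$k$l) * (\<psi>$k * cnj (\<psi>$l)))"
    unfolding braket_expand by (simp add: ac_simps)
  have "braket \<psi> X * cnj (braket \<psi> X) = (\<Sum>i\<in>UNIV. \<Sum>j\<in>UNIV. X$i$j * (cnj (\<psi>$i) * \<psi>$j)) * (\<Sum>k\<in>UNIV. \<Sum>l\<in>UNIV. cnj (X$k$l) * (\<psi>$k * cnj (\<psi>$l)))"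
    by (subst c, subst braket_expand, rule refl)
  also have "\<dots> = (\<Sum>i\<in>UNIV. \<Sum>j\<in>UNIV. \<Sum>k\<in>UNIV. \<Sum>l\<in>UNIV. (X$i$j * (cnj (\<psi>$i) * \<psi>$j)) * (cnj (X$k$l) * (\<psi>$k * cnj (\<psi>$l))))"
    by (subst 1, simp only: 2)
  also have "\<dots> = (\<Sum>i\<in>UNIV. \<Sum>j\<in>UNIV. \<Sum>k\<in>UNIV. \<Sum>l\<in>UNIV. (X$i$j * cnj (X$k$l)) * monoI [i,l] [j,k] \<psi>)"
    by (intro sum.cong refl) (simp add: monoI_def ac_simps)
  finally show ?thesis .
qed

context haar
begin

lemma Ec_sum4:
  assumes "\<And>i j k l. continuous_on UNIV (f i j k l)"
  shows "Ec (\<lambda>\<psi>. \<Sum>i\<in>UNIV. \<Sum>j\<in>UNIV. \<Sum>k\<in>UNIV. \<Sum>l\<in>UNIV. f i j k l \<psi>) =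
    (\<Sum>i\<in>UNIV. \<Sum>j\<in>UNIV. \<Sum>k\<in>UNIV. \<Sum>l\<in>UNIV. Ec (f i j k l))"
  by (simp add: Ec_sum continuous_intros assms)

lemma F_complex:
  assumes U: "unitary_cmat X"
  shows "Ec (\<lambda>\<psi>. braket \<psi> X * cnj (braket \<psi> X)) = (dd + trace X * cnj (trace X)) / (dd * (dd + 1))"
proof -
  have "Ec (\<lambda>\<psi>. braket \<psi> X * cnj (braket \<psi> X)) = 
    (\<Sum>i\<in>UNIV. \<Sum>j\<in>UNIV. \<Sum>k\<in>UNIV. \<Sum>l\<in>UNIV. Ec (\<lambda>\<psi>. (X$i$j * cnj (X$k$l)) * monoI [i,l] [j,k] \<psi>))"
    unfolding hh_expand by (rule Ec_sum4) (intro continuous_intros)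
  also have "\<dots> = (\<Sum>i\<in>UNIV. \<Sum>j\<in>UNIV. \<Sum>k\<in>UNIV. \<Sum>l\<in>UNIV. (X$i$j * cnj (X$k$l)) * (dl i j * dl l k + dl i k * dl l j)) / (dd * (dd + 1))"
    by (simp add: Ec_cmult mom2 W2_explicit sum_divide_distrib dl_def)
  also have "(\<Sum>i\<in>UNIV. \<Sum>j\<in>UNIV. \<Sum>k\<in>UNIV. \<Sum>l\<in>UNIV. (X$i$j * cnj (X$k$l)) * (dl i j * dl l k + dl i k * dl l j))
     = (\<Sum>i\<in>UNIV. \<Sum>j\<in>UNIV. \<Sum>k\<in>UNIV. \<Sum>l\<in>UNIV. (X$i$j * cnj (X$k$l)) * (dl i j * dl l k)) + 
       (\<Sum>i\<in>UNIV. \<Sum>j\<in>UNIV. \<Sum>k\<in>UNIV. \<Sum>l\<in>UNIV. (X$i$j * cnj (X$k$l)) * (dl i k * dl l j))"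
    by (simp add: distrib_left sum.distrib)
  also have "(\<Sum>i\<in>UNIV. \<Sum>j\<in>UNIV. \<Sum>k\<in>UNIV. \<Sum>l\<in>UNIV. (X$i$j * cnj (X$k$l)) * (dl i j * dl l k)) = trace X * cnj (trace X)"
    by (simp add: delta_simps trace_def sum_distrib_left sum_distrib_right) (rule sum.swap)
  also have "(\<Sum>i\<in>UNIV. \<Sum>j\<in>UNIV. \<Sum>k\<in>UNIV. \<Sum>l\<in>UNIV. (X$i$j * cnj (X$k$l)) * (dl i k * dl l j)) = dd"
    by (simp add: delta_simps unitary_sums[OF U] dd_def)
  finally show ?thesis by (simp add: add.commute)
qed

end

lemma sum_factor_l: "(\<Sum>x\<in>A. c * f x) = c * (\<Sum>x\<in>A. f x)" for c :: complex
  by (simp add: sum_distrib_left)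
lemma sum_factor_r: "(\<Sum>x\<in>A. f x * c) = (\<Sum>x\<in>A. f x) * c" for c :: complex
  by (simp add: sum_distrib_right)

context
  fixes X :: "complex^'n^'n"
  assumes U: "unitary_cmat X"
begin

lemma US: "(\<Sum>j\<in>UNIV. X$i$j * cnj (X$k$j)) = (if i = k then 1 else 0)"
  "(\<Sum>j\<in>UNIV. cnj (X$k$j) * X$i$j) = (if i = k then 1 else 0)"
  "(\<Sum>j\<in>UNIV. cnj (X$j$i) * X$j$k) = (if i = k then 1 else 0)"
  "(\<Sum>j\<in>UNIV. X$j$k * cnj (X$j$i)) = (if i = k then 1 else 0)"
  using unitary_sums[OF U, of i k] unitary_sums[OF U, of k i] by (simp_all add: mult.commute)

lemma folds: "(\<Sum>i\<in>UNIV. X$i$i) = trace X" "(\<Sum>i\<in>UNIV. cnj (X$i$i)) = cnj (trace X)"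
  "(\<Sum>i\<in>UNIV. \<Sum>j\<in>UNIV. X$i$j * X$j$i) = trace (X ** X)"
  "(\<Sum>i\<in>UNIV. \<Sum>j\<in>UNIV. cnj (X$i$j) * cnj (X$j$i)) = cnj (trace (X ** X))"
  by (simp_all add: trace_def matrix_matrix_mult_def)

lemmas evals = US folds if_mult_0 sum.delta sum.delta' sum_factor_l sum_factor_r sum_if_lift


lemma T0: "(\<Sum>i\<in>UNIV. \<Sum>j\<in>UNIV. \<Sum>k\<in>UNIV. \<Sum>l\<in>UNIV. \<Sum>i2\<in>UNIV. \<Sum>j2\<in>UNIV. \<Sum>k2\<in>UNIV. \<Sum>l2\<in>UNIV. X$i$j * cnj (X$k$l) * X$i2$j2 * cnj (X$k2$l2) * (dl i j * dl l k * dl i2 j2 * dl l2 k2)) = trace X * cnj (trace X) * trace X * cnj (trace X)"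
proof -
  have "(\<Sum>i\<in>UNIV. \<Sum>j\<in>UNIV. \<Sum>k\<in>UNIV. \<Sum>l\<in>UNIV. \<Sum>i2\<in>UNIV. \<Sum>j2\<in>UNIV. \<Sum>k2\<in>UNIV. \<Sum>l2\<in>UNIV. X$i$j * cnj (X$k$l) * X$i2$j2 * cnj (X$k2$l2) * (dl i j * dl l k * dl i2 j2 * dl l2 k2)) = (\<Sum>i\<in>UNIV. \<Sum>k\<in>UNIV. \<Sum>i2\<in>UNIV. \<Sum>k2\<in>UNIV. X$i$i * cnj (X$k$k) * X$i2$i2 * cnj (X$k2$k2))"
    by (simp add: delta_simps)
  also have "\<dots> = (\<Sum>i\<in>UNIV. (X$i$i) * (\<Sum>k\<in>UNIV. (cnj (X$k$k)) * (\<Sum>i2\<in>UNIV. (X$i2$i2) * (\<Sum>k2\<in>UNIV. (cnj (X$k2$k2))))))"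
  by (simp add: sum_distrib_left sum_distrib_right ac_simps)
  also have "\<dots> = trace X * cnj (trace X) * trace X * cnj (trace X)"
    by (simp add: evals)
  finally show ?thesis .
qed

lemma T1: "(\<Sum>i\<in>UNIV. \<Sum>j\<in>UNIV. \<Sum>k\<in>UNIV. \<Sum>l\<in>UNIV. \<Sum>i2\<in>UNIV. \<Sum>j2\<in>UNIV. \<Sum>k2\<in>UNIV. \<Sum>l2\<in>UNIV. X$i$j * cnj (X$k$l) * X$i2$j2 * cnj (X$k2$l2) * (dl i j * dl l k * dl i2 k2 * dl l2 j2)) = trace X * cnj (trace X) * (of_nat CARD('n)::complex)"
proof -
  have "(\<Sum>i\<in>UNIV. \<Sum>j\<in>UNIV. \<Sum>k\<in>UNIV. \<Sum>l\<in>UNIV. \<Sum>i2\<in>UNIV. \<Sum>j2\<in>UNIV. \<Sum>k2\<in>UNIV. \<Sum>l2\<in>UNIV. X$i$j * cnj (X$k$l) * X$i2$j2 * cnj (X$k2$l2) * (dl i j * dl l k * dl i2 k2 * dl l2 j2)) = (\<Sum>i\<in>UNIV. \<Sum>k\<in>UNIV. \<Sum>i2\<in>UNIV. \<Sum>j2\<in>UNIV. X$i$i * cnj (X$k$k) * X$i2$j2 * cnj (X$i2$j2))"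
    by (simp add: delta_simps)
  also have "\<dots> = (\<Sum>i\<in>UNIV. (X$i$i) * (\<Sum>k\<in>UNIV. (cnj (X$k$k)) * (\<Sum>i2\<in>UNIV. (\<Sum>j2\<in>UNIV. (X$i2$j2 * cnj (X$i2$j2))))))"
  by (simp add: sum_distrib_left sum_distrib_right ac_simps)
  also have "\<dots> = trace X * cnj (trace X) * (of_nat CARD('n)::complex)"
    by (simp add: evals)
  finally show ?thesis .
qed

lemma T2: "(\<Sum>i\<in>UNIV. \<Sum>j\<in>UNIV. \<Sum>k\<in>UNIV. \<Sum>l\<in>UNIV. \<Sum>i2\<in>UNIV. \<Sum>j2\<in>UNIV. \<Sum>k2\<in>UNIV. \<Sum>l2\<in>UNIV. X$i$j * cnj (X$k$l) * X$i2$j2 * cnj (X$k2$l2) * (dl i j * dl l j2 * dl i2 k * dl l2 k2)) = trace X * cnj (trace X) * (of_nat CARD('n)::complex)"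
proof -
  have "(\<Sum>i\<in>UNIV. \<Sum>j\<in>UNIV. \<Sum>k\<in>UNIV. \<Sum>l\<in>UNIV. \<Sum>i2\<in>UNIV. \<Sum>j2\<in>UNIV. \<Sum>k2\<in>UNIV. \<Sum>l2\<in>UNIV. X$i$j * cnj (X$k$l) * X$i2$j2 * cnj (X$k2$l2) * (dl i j * dl l j2 * dl i2 k * dl l2 k2)) = (\<Sum>i\<in>UNIV. \<Sum>k\<in>UNIV. \<Sum>l\<in>UNIV. \<Sum>k2\<in>UNIV. X$i$i * cnj (X$k$l) * X$k$l * cnj (X$k2$k2))"
    by (simp add: delta_simps)
  also have "\<dots> = (\<Sum>i\<in>UNIV. (X$i$i) * (\<Sum>k\<in>UNIV. (\<Sum>l\<in>UNIV. (cnj (X$k$l) * X$k$l) * (\<Sum>k2\<in>UNIV. (cnj (X$k2$k2))))))"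
  by (simp add: sum_distrib_left sum_distrib_right ac_simps)
  also have "\<dots> = trace X * cnj (trace X) * (of_nat CARD('n)::complex)"
    by (simp add: evals)
  finally show ?thesis .
qed

lemma T3: "(\<Sum>i\<in>UNIV. \<Sum>j\<in>UNIV. \<Sum>k\<in>UNIV. \<Sum>l\<in>UNIV. \<Sum>i2\<in>UNIV. \<Sum>j2\<in>UNIV. \<Sum>k2\<in>UNIV. \<Sum>l2\<in>UNIV. X$i$j * cnj (X$k$l) * X$i2$j2 * cnj (X$k2$l2) * (dl i j * dl l j2 * dl i2 k2 * dl l2 k)) = trace X * cnj (trace X)"
proof -
  have "(\<Sum>i\<in>UNIV. \<Sum>j\<in>UNIV. \<Sum>k\<in>UNIV. \<Sum>l\<in>UNIV. \<Sum>i2\<in>UNIV. \<Sum>j2\<in>UNIV. \<Sum>k2\<in>UNIV. \<Sum>l2\<in>UNIV. X$i$j * cnj (X$k$l) * X$i2$j2 * cnj (X$k2$l2) * (dl i j * dl l j2 * dl i2 k2 * dl l2 k)) = (\<Sum>i\<in>UNIV. \<Sum>k\<in>UNIV. \<Sum>l\<in>UNIV. \<Sum>i2\<in>UNIV. X$i$i * cnj (X$k$l) * X$i2$l * cnj (X$i2$k))"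
    by (simp add: delta_simps)
  also have "\<dots> = (\<Sum>i\<in>UNIV. (X$i$i) * (\<Sum>k\<in>UNIV. (\<Sum>l\<in>UNIV. (cnj (X$k$l)) * (\<Sum>i2\<in>UNIV. (X$i2$l * cnj (X$i2$k))))))"
  by (simp add: sum_distrib_left sum_distrib_right ac_simps)
  also have "\<dots> = trace X * cnj (trace X)"
    by (simp add: evals)
  finally show ?thesis .
qed

lemma T4: "(\<Sum>i\<in>UNIV. \<Sum>j\<in>UNIV. \<Sum>k\<in>UNIV. \<Sum>l\<in>UNIV. \<Sum>i2\<in>UNIV. \<Sum>j2\<in>UNIV. \<Sum>k2\<in>UNIV. \<Sum>l2\<in>UNIV. X$i$j * cnj (X$k$l) * X$i2$j2 * cnj (X$k2$l2) * (dl i j * dl l k2 * dl i2 k * dl l2 j2)) = trace X * cnj (trace X)"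
proof -
  have "(\<Sum>i\<in>UNIV. \<Sum>j\<in>UNIV. \<Sum>k\<in>UNIV. \<Sum>l\<in>UNIV. \<Sum>i2\<in>UNIV. \<Sum>j2\<in>UNIV. \<Sum>k2\<in>UNIV. \<Sum>l2\<in>UNIV. X$i$j * cnj (X$k$l) * X$i2$j2 * cnj (X$k2$l2) * (dl i j * dl l k2 * dl i2 k * dl l2 j2)) = (\<Sum>i\<in>UNIV. \<Sum>k\<in>UNIV. \<Sum>l\<in>UNIV. \<Sum>j2\<in>UNIV. X$i$i * cnj (X$k$l) * X$k$j2 * cnj (X$l$j2))"
    by (simp add: delta_simps)
  also have "\<dots> = (\<Sum>i\<in>UNIV. (X$i$i) * (\<Sum>k\<in>UNIV. (\<Sum>l\<in>UNIV. (cnj (X$k$l)) * (\<Sum>j2\<in>UNIV. (X$k$j2 * cnj (X$l$j2))))))"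
  by (simp add: sum_distrib_left sum_distrib_right ac_simps)
  also have "\<dots> = trace X * cnj (trace X)"
    by (simp add: evals)
  finally show ?thesis .
qed

lemma T5: "(\<Sum>i\<in>UNIV. \<Sum>j\<in>UNIV. \<Sum>k\<in>UNIV. \<Sum>l\<in>UNIV. \<Sum>i2\<in>UNIV. \<Sum>j2\<in>UNIV. \<Sum>k2\<in>UNIV. \<Sum>l2\<in>UNIV. X$i$j * cnj (X$k$l) * X$i2$j2 * cnj (X$k2$l2) * (dl i j * dl l k2 * dl i2 j2 * dl l2 k)) = trace X * trace X * cnj (trace (X ** X))"
proof -
  have "(\<Sum>i\<in>UNIV. \<Sum>j\<in>UNIV. \<Sum>k\<in>UNIV. \<Sum>l\<in>UNIV. \<Sum>i2\<in>UNIV. \<Sum>j2\<in>UNIV. \<Sum>k2\<in>UNIV. \<Sum>l2\<in>UNIV. X$i$j * cnj (X$k$l) * X$i2$j2 * cnj (X$k2$l2) * (dl i j * dl l k2 * dl i2 j2 * dl l2 k)) = (\<Sum>i\<in>UNIV. \<Sum>k\<in>UNIV. \<Sum>l\<in>UNIV. \<Sum>i2\<in>UNIV. X$i$i * cnj (X$k$l) * X$i2$i2 * cnj (X$l$k))"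
    by (simp add: delta_simps)
  also have "\<dots> = (\<Sum>i\<in>UNIV. (X$i$i) * (\<Sum>k\<in>UNIV. (\<Sum>l\<in>UNIV. (cnj (X$k$l) * cnj (X$l$k)) * (\<Sum>i2\<in>UNIV. (X$i2$i2)))))"
  by (simp add: sum_distrib_left sum_distrib_right ac_simps)
  also have "\<dots> = trace X * trace X * cnj (trace (X ** X))"
    by (simp add: evals)
  finally show ?thesis .
qed

lemma T6: "(\<Sum>i\<in>UNIV. \<Sum>j\<in>UNIV. \<Sum>k\<in>UNIV. \<Sum>l\<in>UNIV. \<Sum>i2\<in>UNIV. \<Sum>j2\<in>UNIV. \<Sum>k2\<in>UNIV. \<Sum>l2\<in>UNIV. X$i$j * cnj (X$k$l) * X$i2$j2 * cnj (X$k2$l2) * (dl i k * dl l j * dl i2 j2 * dl l2 k2)) = trace X * cnj (trace X) * (of_nat CARD('n)::complex)"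
proof -
  have "(\<Sum>i\<in>UNIV. \<Sum>j\<in>UNIV. \<Sum>k\<in>UNIV. \<Sum>l\<in>UNIV. \<Sum>i2\<in>UNIV. \<Sum>j2\<in>UNIV. \<Sum>k2\<in>UNIV. \<Sum>l2\<in>UNIV. X$i$j * cnj (X$k$l) * X$i2$j2 * cnj (X$k2$l2) * (dl i k * dl l j * dl i2 j2 * dl l2 k2)) = (\<Sum>i\<in>UNIV. \<Sum>j\<in>UNIV. \<Sum>i2\<in>UNIV. \<Sum>k2\<in>UNIV. X$i$j * cnj (X$i$j) * X$i2$i2 * cnj (X$k2$k2))"
    by (simp add: delta_simps)
  also have "\<dots> = (\<Sum>i\<in>UNIV. (\<Sum>j\<in>UNIV. (X$i$j * cnj (X$i$j)) * (\<Sum>i2\<in>UNIV. (X$i2$i2) * (\<Sum>k2\<in>UNIV. (cnj (X$k2$k2))))))"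
  by (simp add: sum_distrib_left sum_distrib_right ac_simps)
  also have "\<dots> = trace X * cnj (trace X) * (of_nat CARD('n)::complex)"
    by (simp add: evals)
  finally show ?thesis .
qed

lemma T7: "(\<Sum>i\<in>UNIV. \<Sum>j\<in>UNIV. \<Sum>k\<in>UNIV. \<Sum>l\<in>UNIV. \<Sum>i2\<in>UNIV. \<Sum>j2\<in>UNIV. \<Sum>k2\<in>UNIV. \<Sum>l2\<in>UNIV. X$i$j * cnj (X$k$l) * X$i2$j2 * cnj (X$k2$l2) * (dl i k * dl l j * dl i2 k2 * dl l2 j2)) = (of_nat CARD('n)::complex) * (of_nat CARD('n)::complex)"
proof -
  have "(\<Sum>i\<in>UNIV. \<Sum>j\<in>UNIV. \<Sum>k\<in>UNIV. \<Sum>l\<in>UNIV. \<Sum>i2\<in>UNIV. \<Sum>j2\<in>UNIV. \<Sum>k2\<in>UNIV. \<Sum>l2\<in>UNIV. X$i$j * cnj (X$k$l) * X$i2$j2 * cnj (X$k2$l2) * (dl i k * dl l j * dl i2 k2 * dl l2 j2)) = (\<Sum>i\<in>UNIV. \<Sum>j\<in>UNIV. \<Sum>i2\<in>UNIV. \<Sum>j2\<in>UNIV. X$i$j * cnj (X$i$j) * X$i2$j2 * cnj (X$i2$j2))"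
    by (simp add: delta_simps)
  also have "\<dots> = (\<Sum>i\<in>UNIV. (\<Sum>j\<in>UNIV. (X$i$j * cnj (X$i$j)) * (\<Sum>i2\<in>UNIV. (\<Sum>j2\<in>UNIV. (X$i2$j2 * cnj (X$i2$j2))))))"
  by (simp add: sum_distrib_left sum_distrib_right ac_simps)
  also have "\<dots> = (of_nat CARD('n)::complex) * (of_nat CARD('n)::complex)"
    by (simp add: evals)
  finally show ?thesis .
qed

lemma T8: "(\<Sum>i\<in>UNIV. \<Sum>j\<in>UNIV. \<Sum>k\<in>UNIV. \<Sum>l\<in>UNIV. \<Sum>i2\<in>UNIV. \<Sum>j2\<in>UNIV. \<Sum>k2\<in>UNIV. \<Sum>l2\<in>UNIV. X$i$j * cnj (X$k$l) * X$i2$j2 * cnj (X$k2$l2) * (dl i k * dl l j2 * dl i2 j * dl l2 k2)) = trace X * cnj (trace X)"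
proof -
  have "(\<Sum>i\<in>UNIV. \<Sum>j\<in>UNIV. \<Sum>k\<in>UNIV. \<Sum>l\<in>UNIV. \<Sum>i2\<in>UNIV. \<Sum>j2\<in>UNIV. \<Sum>k2\<in>UNIV. \<Sum>l2\<in>UNIV. X$i$j * cnj (X$k$l) * X$i2$j2 * cnj (X$k2$l2) * (dl i k * dl l j2 * dl i2 j * dl l2 k2)) = (\<Sum>i\<in>UNIV. \<Sum>j\<in>UNIV. \<Sum>l\<in>UNIV. \<Sum>k2\<in>UNIV. X$i$j * cnj (X$i$l) * X$j$l * cnj (X$k2$k2))"
    by (simp add: delta_simps)
  also have "\<dots> = (\<Sum>i\<in>UNIV. (\<Sum>j\<in>UNIV. (X$i$j) * (\<Sum>l\<in>UNIV. (cnj (X$i$l) * X$j$l) * (\<Sum>k2\<in>UNIV. (cnj (X$k2$k2))))))"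
  by (simp add: sum_distrib_left sum_distrib_right ac_simps)
  also have "\<dots> = trace X * cnj (trace X)"
    by (simp add: evals)
  finally show ?thesis .
qed

lemma T9: "(\<Sum>i\<in>UNIV. \<Sum>j\<in>UNIV. \<Sum>k\<in>UNIV. \<Sum>l\<in>UNIV. \<Sum>i2\<in>UNIV. \<Sum>j2\<in>UNIV. \<Sum>k2\<in>UNIV. \<Sum>l2\<in>UNIV. X$i$j * cnj (X$k$l) * X$i2$j2 * cnj (X$k2$l2) * (dl i k * dl l j2 * dl i2 k2 * dl l2 j)) = (of_nat CARD('n)::complex)"
proof -
  have "(\<Sum>i\<in>UNIV. \<Sum>j\<in>UNIV. \<Sum>k\<in>UNIV. \<Sum>l\<in>UNIV. \<Sum>i2\<in>UNIV. \<Sum>j2\<in>UNIV. \<Sum>k2\<in>UNIV. \<Sum>l2\<in>UNIV. X$i$j * cnj (X$k$l) * X$i2$j2 * cnj (X$k2$l2) * (dl i k * dl l j2 * dl i2 k2 * dl l2 j)) = (\<Sum>i\<in>UNIV. \<Sum>j\<in>UNIV. \<Sum>l\<in>UNIV. \<Sum>i2\<in>UNIV. X$i$j * cnj (X$i$l) * X$i2$l * cnj (X$i2$j))"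
    by (simp add: delta_simps)
  also have "\<dots> = (\<Sum>i\<in>UNIV. (\<Sum>j\<in>UNIV. (X$i$j) * (\<Sum>l\<in>UNIV. (cnj (X$i$l)) * (\<Sum>i2\<in>UNIV. (X$i2$l * cnj (X$i2$j))))))"
  by (simp add: sum_distrib_left sum_distrib_right ac_simps)
  also have "\<dots> = (of_nat CARD('n)::complex)"
    by (simp add: evals)
  finally show ?thesis .
qed

lemma T10: "(\<Sum>i\<in>UNIV. \<Sum>j\<in>UNIV. \<Sum>k\<in>UNIV. \<Sum>l\<in>UNIV. \<Sum>i2\<in>UNIV. \<Sum>j2\<in>UNIV. \<Sum>k2\<in>UNIV. \<Sum>l2\<in>UNIV. X$i$j * cnj (X$k$l) * X$i2$j2 * cnj (X$k2$l2) * (dl i k * dl l k2 * dl i2 j * dl l2 j2)) = (of_nat CARD('n)::complex)"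
proof -
  have "(\<Sum>i\<in>UNIV. \<Sum>j\<in>UNIV. \<Sum>k\<in>UNIV. \<Sum>l\<in>UNIV. \<Sum>i2\<in>UNIV. \<Sum>j2\<in>UNIV. \<Sum>k2\<in>UNIV. \<Sum>l2\<in>UNIV. X$i$j * cnj (X$k$l) * X$i2$j2 * cnj (X$k2$l2) * (dl i k * dl l k2 * dl i2 j * dl l2 j2)) = (\<Sum>i\<in>UNIV. \<Sum>j\<in>UNIV. \<Sum>l\<in>UNIV. \<Sum>j2\<in>UNIV. X$i$j * cnj (X$i$l) * X$j$j2 * cnj (X$l$j2))"
    by (simp add: delta_simps)
  also have "\<dots> = (\<Sum>i\<in>UNIV. (\<Sum>j\<in>UNIV. (X$i$j) * (\<Sum>l\<in>UNIV. (cnj (X$i$l)) * (\<Sum>j2\<in>UNIV. (X$j$j2 * cnj (X$l$j2))))))"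
  by (simp add: sum_distrib_left sum_distrib_right ac_simps)
  also have "\<dots> = (of_nat CARD('n)::complex)"
    by (simp add: evals)
  finally show ?thesis .
qed

lemma T11: "(\<Sum>i\<in>UNIV. \<Sum>j\<in>UNIV. \<Sum>k\<in>UNIV. \<Sum>l\<in>UNIV. \<Sum>i2\<in>UNIV. \<Sum>j2\<in>UNIV. \<Sum>k2\<in>UNIV. \<Sum>l2\<in>UNIV. X$i$j * cnj (X$k$l) * X$i2$j2 * cnj (X$k2$l2) * (dl i k * dl l k2 * dl i2 j2 * dl l2 j)) = trace X * cnj (trace X)"
proof -
  have "(\<Sum>i\<in>UNIV. \<Sum>j\<in>UNIV. \<Sum>k\<in>UNIV. \<Sum>l\<in>UNIV. \<Sum>i2\<in>UNIV. \<Sum>j2\<in>UNIV. \<Sum>k2\<in>UNIV. \<Sum>l2\<in>UNIV. X$i$j * cnj (X$k$l) * X$i2$j2 * cnj (X$k2$l2) * (dl i k * dl l k2 * dl i2 j2 * dl l2 j)) = (\<Sum>i\<in>UNIV. \<Sum>j\<in>UNIV. \<Sum>l\<in>UNIV. \<Sum>i2\<in>UNIV. X$i$j * cnj (X$i$l) * X$i2$i2 * cnj (X$l$j))"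
    by (simp add: delta_simps)
  also have "\<dots> = (\<Sum>j\<in>UNIV. (\<Sum>l\<in>UNIV. (cnj (X$l$j)) * (\<Sum>i\<in>UNIV. (X$i$j * cnj (X$i$l)) * (\<Sum>i2\<in>UNIV. (X$i2$i2)))))"
  proof -
    have "(\<Sum>i\<in>UNIV. \<Sum>j\<in>UNIV. \<Sum>l\<in>UNIV. \<Sum>i2\<in>UNIV. X$i$j * cnj (X$i$l) * X$i2$i2 * cnj (X$l$j)) = (\<Sum>j\<in>UNIV. \<Sum>i\<in>UNIV. \<Sum>l\<in>UNIV. \<Sum>i2\<in>UNIV. X$i$j * cnj (X$i$l) * X$i2$i2 * cnj (X$l$j))"
      by (rule sum.swap)
    also have "\<dots> = (\<Sum>j\<in>UNIV. \<Sum>l\<in>UNIV. \<Sum>i\<in>UNIV. \<Sum>i2\<in>UNIV. X$i$j * cnj (X$i$l) * X$i2$i2 * cnj (X$l$j))"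
      by (intro sum.cong refl sum.swap)
    also have "\<dots> = (\<Sum>j\<in>UNIV. (\<Sum>l\<in>UNIV. (cnj (X$l$j)) * (\<Sum>i\<in>UNIV. (X$i$j * cnj (X$i$l)) * (\<Sum>i2\<in>UNIV. (X$i2$i2)))))"
      by (simp add: sum_distrib_left sum_distrib_right ac_simps)
    finally show ?thesis .
  qed
  also have "\<dots> = trace X * cnj (trace X)"
    by (simp add: evals)
  finally show ?thesis .
qed

lemma T12: "(\<Sum>i\<in>UNIV. \<Sum>j\<in>UNIV. \<Sum>k\<in>UNIV. \<Sum>l\<in>UNIV. \<Sum>i2\<in>UNIV. \<Sum>j2\<in>UNIV. \<Sum>k2\<in>UNIV. \<Sum>l2\<in>UNIV. X$i$j * cnj (X$k$l) * X$i2$j2 * cnj (X$k2$l2) * (dl i j2 * dl l j * dl i2 k * dl l2 k2)) = trace X * cnj (trace X)"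
proof -
  have "(\<Sum>i\<in>UNIV. \<Sum>j\<in>UNIV. \<Sum>k\<in>UNIV. \<Sum>l\<in>UNIV. \<Sum>i2\<in>UNIV. \<Sum>j2\<in>UNIV. \<Sum>k2\<in>UNIV. \<Sum>l2\<in>UNIV. X$i$j * cnj (X$k$l) * X$i2$j2 * cnj (X$k2$l2) * (dl i j2 * dl l j * dl i2 k * dl l2 k2)) = (\<Sum>i\<in>UNIV. \<Sum>j\<in>UNIV. \<Sum>k\<in>UNIV. \<Sum>k2\<in>UNIV. X$i$j * cnj (X$k$j) * X$k$i * cnj (X$k2$k2))"
    by (simp add: delta_simps)
  also have "\<dots> = (\<Sum>i\<in>UNIV. (\<Sum>j\<in>UNIV. (X$i$j) * (\<Sum>k\<in>UNIV. (cnj (X$k$j) * X$k$i) * (\<Sum>k2\<in>UNIV. (cnj (X$k2$k2))))))"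
  by (simp add: sum_distrib_left sum_distrib_right ac_simps)
  also have "\<dots> = trace X * cnj (trace X)"
    by (simp add: evals)
  finally show ?thesis .
qed

lemma T13: "(\<Sum>i\<in>UNIV. \<Sum>j\<in>UNIV. \<Sum>k\<in>UNIV. \<Sum>l\<in>UNIV. \<Sum>i2\<in>UNIV. \<Sum>j2\<in>UNIV. \<Sum>k2\<in>UNIV. \<Sum>l2\<in>UNIV. X$i$j * cnj (X$k$l) * X$i2$j2 * cnj (X$k2$l2) * (dl i j2 * dl l j * dl i2 k2 * dl l2 k)) = (of_nat CARD('n)::complex)"
proof -
  have "(\<Sum>i\<in>UNIV. \<Sum>j\<in>UNIV. \<Sum>k\<in>UNIV. \<Sum>l\<in>UNIV. \<Sum>i2\<in>UNIV. \<Sum>j2\<in>UNIV. \<Sum>k2\<in>UNIV. \<Sum>l2\<in>UNIV. X$i$j * cnj (X$k$l) * X$i2$j2 * cnj (X$k2$l2) * (dl i j2 * dl l j * dl i2 k2 * dl l2 k)) = (\<Sum>i\<in>UNIV. \<Sum>j\<in>UNIV. \<Sum>k\<in>UNIV. \<Sum>i2\<in>UNIV. X$i$j * cnj (X$k$j) * X$i2$i * cnj (X$i2$k))"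
    by (simp add: delta_simps)
  also have "\<dots> = (\<Sum>i\<in>UNIV. (\<Sum>j\<in>UNIV. (X$i$j) * (\<Sum>k\<in>UNIV. (cnj (X$k$j)) * (\<Sum>i2\<in>UNIV. (X$i2$i * cnj (X$i2$k))))))"
  by (simp add: sum_distrib_left sum_distrib_right ac_simps)
  also have "\<dots> = (of_nat CARD('n)::complex)"
    by (simp add: evals)
  finally show ?thesis .
qed

lemma T14: "(\<Sum>i\<in>UNIV. \<Sum>j\<in>UNIV. \<Sum>k\<in>UNIV. \<Sum>l\<in>UNIV. \<Sum>i2\<in>UNIV. \<Sum>j2\<in>UNIV. \<Sum>k2\<in>UNIV. \<Sum>l2\<in>UNIV. X$i$j * cnj (X$k$l) * X$i2$j2 * cnj (X$k2$l2) * (dl i j2 * dl l k * dl i2 j * dl l2 k2)) = trace (X ** X) * cnj (trace X) * cnj (trace X)"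
proof -
  have "(\<Sum>i\<in>UNIV. \<Sum>j\<in>UNIV. \<Sum>k\<in>UNIV. \<Sum>l\<in>UNIV. \<Sum>i2\<in>UNIV. \<Sum>j2\<in>UNIV. \<Sum>k2\<in>UNIV. \<Sum>l2\<in>UNIV. X$i$j * cnj (X$k$l) * X$i2$j2 * cnj (X$k2$l2) * (dl i j2 * dl l k * dl i2 j * dl l2 k2)) = (\<Sum>i\<in>UNIV. \<Sum>j\<in>UNIV. \<Sum>k\<in>UNIV. \<Sum>k2\<in>UNIV. X$i$j * cnj (X$k$k) * X$j$i * cnj (X$k2$k2))"
    by (simp add: delta_simps)
  also have "\<dots> = (\<Sum>i\<in>UNIV. (\<Sum>j\<in>UNIV. (X$i$j * X$j$i) * (\<Sum>k\<in>UNIV. (cnj (X$k$k)) * (\<Sum>k2\<in>UNIV. (cnj (X$k2$k2))))))"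
  by (simp add: sum_distrib_left sum_distrib_right ac_simps)
  also have "\<dots> = trace (X ** X) * cnj (trace X) * cnj (trace X)"
    by (simp add: evals)
  finally show ?thesis .
qed

lemma T15: "(\<Sum>i\<in>UNIV. \<Sum>j\<in>UNIV. \<Sum>k\<in>UNIV. \<Sum>l\<in>UNIV. \<Sum>i2\<in>UNIV. \<Sum>j2\<in>UNIV. \<Sum>k2\<in>UNIV. \<Sum>l2\<in>UNIV. X$i$j * cnj (X$k$l) * X$i2$j2 * cnj (X$k2$l2) * (dl i j2 * dl l k * dl i2 k2 * dl l2 j)) = trace X * cnj (trace X)"
proof -
  have "(\<Sum>i\<in>UNIV. \<Sum>j\<in>UNIV. \<Sum>k\<in>UNIV. \<Sum>l\<in>UNIV. \<Sum>i2\<in>UNIV. \<Sum>j2\<in>UNIV. \<Sum>k2\<in>UNIV. \<Sum>l2\<in>UNIV. X$i$j * cnj (X$k$l) * X$i2$j2 * cnj (X$k2$l2) * (dl i j2 * dl l k * dl i2 k2 * dl l2 j)) = (\<Sum>i\<in>UNIV. \<Sum>j\<in>UNIV. \<Sum>k\<in>UNIV. \<Sum>i2\<in>UNIV. X$i$j * cnj (X$k$k) * X$i2$i * cnj (X$i2$j))"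
    by (simp add: delta_simps)
  also have "\<dots> = (\<Sum>i\<in>UNIV. (\<Sum>j\<in>UNIV. (X$i$j) * (\<Sum>k\<in>UNIV. (cnj (X$k$k)) * (\<Sum>i2\<in>UNIV. (X$i2$i * cnj (X$i2$j))))))"
  by (simp add: sum_distrib_left sum_distrib_right ac_simps)
  also have "\<dots> = trace X * cnj (trace X)"
    by (simp add: evals)
  finally show ?thesis .
qed

lemma T16: "(\<Sum>i\<in>UNIV. \<Sum>j\<in>UNIV. \<Sum>k\<in>UNIV. \<Sum>l\<in>UNIV. \<Sum>i2\<in>UNIV. \<Sum>j2\<in>UNIV. \<Sum>k2\<in>UNIV. \<Sum>l2\<in>UNIV. X$i$j * cnj (X$k$l) * X$i2$j2 * cnj (X$k2$l2) * (dl i j2 * dl l k2 * dl i2 j * dl l2 k)) = trace (X ** X) * cnj (trace (X ** X))"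
proof -
  have "(\<Sum>i\<in>UNIV. \<Sum>j\<in>UNIV. \<Sum>k\<in>UNIV. \<Sum>l\<in>UNIV. \<Sum>i2\<in>UNIV. \<Sum>j2\<in>UNIV. \<Sum>k2\<in>UNIV. \<Sum>l2\<in>UNIV. X$i$j * cnj (X$k$l) * X$i2$j2 * cnj (X$k2$l2) * (dl i j2 * dl l k2 * dl i2 j * dl l2 k)) = (\<Sum>i\<in>UNIV. \<Sum>j\<in>UNIV. \<Sum>k\<in>UNIV. \<Sum>l\<in>UNIV. X$i$j * cnj (X$k$l) * X$j$i * cnj (X$l$k))"
    by (simp add: delta_simps)
  also have "\<dots> = (\<Sum>i\<in>UNIV. (\<Sum>j\<in>UNIV. (X$i$j * X$j$i) * (\<Sum>k\<in>UNIV. (\<Sum>l\<in>UNIV. (cnj (X$k$l) * cnj (X$l$k))))))"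
  by (simp add: sum_distrib_left sum_distrib_right ac_simps)
  also have "\<dots> = trace (X ** X) * cnj (trace (X ** X))"
    by (simp add: evals)
  finally show ?thesis .
qed

lemma T17: "(\<Sum>i\<in>UNIV. \<Sum>j\<in>UNIV. \<Sum>k\<in>UNIV. \<Sum>l\<in>UNIV. \<Sum>i2\<in>UNIV. \<Sum>j2\<in>UNIV. \<Sum>k2\<in>UNIV. \<Sum>l2\<in>UNIV. X$i$j * cnj (X$k$l) * X$i2$j2 * cnj (X$k2$l2) * (dl i j2 * dl l k2 * dl i2 k * dl l2 j)) = (of_nat CARD('n)::complex)"
proof -
  have "(\<Sum>i\<in>UNIV. \<Sum>j\<in>UNIV. \<Sum>k\<in>UNIV. \<Sum>l\<in>UNIV. \<Sum>i2\<in>UNIV. \<Sum>j2\<in>UNIV. \<Sum>k2\<in>UNIV. \<Sum>l2\<in>UNIV. X$i$j * cnj (X$k$l) * X$i2$j2 * cnj (X$k2$l2) * (dl i j2 * dl l k2 * dl i2 k * dl l2 j)) = (\<Sum>i\<in>UNIV. \<Sum>j\<in>UNIV. \<Sum>k\<in>UNIV. \<Sum>l\<in>UNIV. X$i$j * cnj (X$k$l) * X$k$i * cnj (X$l$j))"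
    by (simp add: delta_simps)
  also have "\<dots> = (\<Sum>i\<in>UNIV. (\<Sum>k\<in>UNIV. (X$k$i) * (\<Sum>l\<in>UNIV. (cnj (X$k$l)) * (\<Sum>j\<in>UNIV. (X$i$j * cnj (X$l$j))))))"
  proof -
    have "(\<Sum>i\<in>UNIV. \<Sum>j\<in>UNIV. \<Sum>k\<in>UNIV. \<Sum>l\<in>UNIV. X$i$j * cnj (X$k$l) * X$k$i * cnj (X$l$j)) = (\<Sum>i\<in>UNIV. \<Sum>k\<in>UNIV. \<Sum>j\<in>UNIV. \<Sum>l\<in>UNIV. X$i$j * cnj (X$k$l) * X$k$i * cnj (X$l$j))"
      by (intro sum.cong refl sum.swap)
    also have "\<dots> = (\<Sum>i\<in>UNIV. \<Sum>k\<in>UNIV. \<Sum>l\<in>UNIV. \<Sum>j\<in>UNIV. X$i$j * cnj (X$k$l) * X$k$i * cnj (X$l$j))"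
      by (intro sum.cong refl sum.swap)
    also have "\<dots> = (\<Sum>i\<in>UNIV. (\<Sum>k\<in>UNIV. (X$k$i) * (\<Sum>l\<in>UNIV. (cnj (X$k$l)) * (\<Sum>j\<in>UNIV. (X$i$j * cnj (X$l$j))))))"
      by (simp add: sum_distrib_left sum_distrib_right ac_simps)
    finally show ?thesis .
  qed
  also have "\<dots> = (of_nat CARD('n)::complex)"
    by (simp add: evals)
  finally show ?thesis .
qed

lemma T18: "(\<Sum>i\<in>UNIV. \<Sum>j\<in>UNIV. \<Sum>k\<in>UNIV. \<Sum>l\<in>UNIV. \<Sum>i2\<in>UNIV. \<Sum>j2\<in>UNIV. \<Sum>k2\<in>UNIV. \<Sum>l2\<in>UNIV. X$i$j * cnj (X$k$l) * X$i2$j2 * cnj (X$k2$l2) * (dl i k2 * dl l j * dl i2 k * dl l2 j2)) = (of_nat CARD('n)::complex)"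
proof -
  have "(\<Sum>i\<in>UNIV. \<Sum>j\<in>UNIV. \<Sum>k\<in>UNIV. \<Sum>l\<in>UNIV. \<Sum>i2\<in>UNIV. \<Sum>j2\<in>UNIV. \<Sum>k2\<in>UNIV. \<Sum>l2\<in>UNIV. X$i$j * cnj (X$k$l) * X$i2$j2 * cnj (X$k2$l2) * (dl i k2 * dl l j * dl i2 k * dl l2 j2)) = (\<Sum>i\<in>UNIV. \<Sum>j\<in>UNIV. \<Sum>k\<in>UNIV. \<Sum>j2\<in>UNIV. X$i$j * cnj (X$k$j) * X$k$j2 * cnj (X$i$j2))"
    by (simp add: delta_simps)
  also have "\<dots> = (\<Sum>i\<in>UNIV. (\<Sum>j\<in>UNIV. (X$i$j) * (\<Sum>k\<in>UNIV. (cnj (X$k$j)) * (\<Sum>j2\<in>UNIV. (X$k$j2 * cnj (X$i$j2))))))"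
  by (simp add: sum_distrib_left sum_distrib_right ac_simps)
  also have "\<dots> = (of_nat CARD('n)::complex)"
    by (simp add: evals)
  finally show ?thesis .
qed

lemma T19: "(\<Sum>i\<in>UNIV. \<Sum>j\<in>UNIV. \<Sum>k\<in>UNIV. \<Sum>l\<in>UNIV. \<Sum>i2\<in>UNIV. \<Sum>j2\<in>UNIV. \<Sum>k2\<in>UNIV. \<Sum>l2\<in>UNIV. X$i$j * cnj (X$k$l) * X$i2$j2 * cnj (X$k2$l2) * (dl i k2 * dl l j * dl i2 j2 * dl l2 k)) = trace X * cnj (trace X)"
proof -
  have "(\<Sum>i\<in>UNIV. \<Sum>j\<in>UNIV. \<Sum>k\<in>UNIV. \<Sum>l\<in>UNIV. \<Sum>i2\<in>UNIV. \<Sum>j2\<in>UNIV. \<Sum>k2\<in>UNIV. \<Sum>l2\<in>UNIV. X$i$j * cnj (X$k$l) * X$i2$j2 * cnj (X$k2$l2) * (dl i k2 * dl l j * dl i2 j2 * dl l2 k)) = (\<Sum>i\<in>UNIV. \<Sum>j\<in>UNIV. \<Sum>k\<in>UNIV. \<Sum>i2\<in>UNIV. X$i$j * cnj (X$k$j) * X$i2$i2 * cnj (X$i$k))"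
    by (simp add: delta_simps)
  also have "\<dots> = (\<Sum>i\<in>UNIV. (\<Sum>k\<in>UNIV. (cnj (X$i$k)) * (\<Sum>j\<in>UNIV. (X$i$j * cnj (X$k$j)) * (\<Sum>i2\<in>UNIV. (X$i2$i2)))))"
  proof -
    have "(\<Sum>i\<in>UNIV. \<Sum>j\<in>UNIV. \<Sum>k\<in>UNIV. \<Sum>i2\<in>UNIV. X$i$j * cnj (X$k$j) * X$i2$i2 * cnj (X$i$k)) = (\<Sum>i\<in>UNIV. \<Sum>k\<in>UNIV. \<Sum>j\<in>UNIV. \<Sum>i2\<in>UNIV. X$i$j * cnj (X$k$j) * X$i2$i2 * cnj (X$i$k))"
      by (intro sum.cong refl sum.swap)
    also have "\<dots> = (\<Sum>i\<in>UNIV. (\<Sum>k\<in>UNIV. (cnj (X$i$k)) * (\<Sum>j\<in>UNIV. (X$i$j * cnj (X$k$j)) * (\<Sum>i2\<in>UNIV. (X$i2$i2)))))"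
      by (simp add: sum_distrib_left sum_distrib_right ac_simps)
    finally show ?thesis .
  qed
  also have "\<dots> = trace X * cnj (trace X)"
    by (simp add: evals)
  finally show ?thesis .
qed

lemma T20: "(\<Sum>i\<in>UNIV. \<Sum>j\<in>UNIV. \<Sum>k\<in>UNIV. \<Sum>l\<in>UNIV. \<Sum>i2\<in>UNIV. \<Sum>j2\<in>UNIV. \<Sum>k2\<in>UNIV. \<Sum>l2\<in>UNIV. X$i$j * cnj (X$k$l) * X$i2$j2 * cnj (X$k2$l2) * (dl i k2 * dl l k * dl i2 j * dl l2 j2)) = trace X * cnj (trace X)"
proof -
  have "(\<Sum>i\<in>UNIV. \<Sum>j\<in>UNIV. \<Sum>k\<in>UNIV. \<Sum>l\<in>UNIV. \<Sum>i2\<in>UNIV. \<Sum>j2\<in>UNIV. \<Sum>k2\<in>UNIV. \<Sum>l2\<in>UNIV. X$i$j * cnj (X$k$l) * X$i2$j2 * cnj (X$k2$l2) * (dl i k2 * dl l k * dl i2 j * dl l2 j2)) = (\<Sum>i\<in>UNIV. \<Sum>j\<in>UNIV. \<Sum>k\<in>UNIV. \<Sum>j2\<in>UNIV. X$i$j * cnj (X$k$k) * X$j$j2 * cnj (X$i$j2))"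
    by (simp add: delta_simps)
  also have "\<dots> = (\<Sum>i\<in>UNIV. (\<Sum>j\<in>UNIV. (X$i$j) * (\<Sum>k\<in>UNIV. (cnj (X$k$k)) * (\<Sum>j2\<in>UNIV. (X$j$j2 * cnj (X$i$j2))))))"
  by (simp add: sum_distrib_left sum_distrib_right ac_simps)
  also have "\<dots> = trace X * cnj (trace X)"
    by (simp add: evals)
  finally show ?thesis .
qed

lemma T21: "(\<Sum>i\<in>UNIV. \<Sum>j\<in>UNIV. \<Sum>k\<in>UNIV. \<Sum>l\<in>UNIV. \<Sum>i2\<in>UNIV. \<Sum>j2\<in>UNIV. \<Sum>k2\<in>UNIV. \<Sum>l2\<in>UNIV. X$i$j * cnj (X$k$l) * X$i2$j2 * cnj (X$k2$l2) * (dl i k2 * dl l k * dl i2 j2 * dl l2 j)) = trace X * cnj (trace X) * (of_nat CARD('n)::complex)"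
proof -
  have "(\<Sum>i\<in>UNIV. \<Sum>j\<in>UNIV. \<Sum>k\<in>UNIV. \<Sum>l\<in>UNIV. \<Sum>i2\<in>UNIV. \<Sum>j2\<in>UNIV. \<Sum>k2\<in>UNIV. \<Sum>l2\<in>UNIV. X$i$j * cnj (X$k$l) * X$i2$j2 * cnj (X$k2$l2) * (dl i k2 * dl l k * dl i2 j2 * dl l2 j)) = (\<Sum>i\<in>UNIV. \<Sum>j\<in>UNIV. \<Sum>k\<in>UNIV. \<Sum>i2\<in>UNIV. X$i$j * cnj (X$k$k) * X$i2$i2 * cnj (X$i$j))"
    by (simp add: delta_simps)
  also have "\<dots> = (\<Sum>i\<in>UNIV. (\<Sum>j\<in>UNIV. (X$i$j * cnj (X$i$j)) * (\<Sum>k\<in>UNIV. (cnj (X$k$k)) * (\<Sum>i2\<in>UNIV. (X$i2$i2)))))"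
  by (simp add: sum_distrib_left sum_distrib_right ac_simps)
  also have "\<dots> = trace X * cnj (trace X) * (of_nat CARD('n)::complex)"
    by (simp add: evals)
  finally show ?thesis .
qed

lemma T22: "(\<Sum>i\<in>UNIV. \<Sum>j\<in>UNIV. \<Sum>k\<in>UNIV. \<Sum>l\<in>UNIV. \<Sum>i2\<in>UNIV. \<Sum>j2\<in>UNIV. \<Sum>k2\<in>UNIV. \<Sum>l2\<in>UNIV. X$i$j * cnj (X$k$l) * X$i2$j2 * cnj (X$k2$l2) * (dl i k2 * dl l j2 * dl i2 j * dl l2 k)) = (of_nat CARD('n)::complex)"
proof -
  have "(\<Sum>i\<in>UNIV. \<Sum>j\<in>UNIV. \<Sum>k\<in>UNIV. \<Sum>l\<in>UNIV. \<Sum>i2\<in>UNIV. \<Sum>j2\<in>UNIV. \<Sum>k2\<in>UNIV. \<Sum>l2\<in>UNIV. X$i$j * cnj (X$k$l) * X$i2$j2 * cnj (X$k2$l2) * (dl i k2 * dl l j2 * dl i2 j * dl l2 k)) = (\<Sum>i\<in>UNIV. \<Sum>j\<in>UNIV. \<Sum>k\<in>UNIV. \<Sum>l\<in>UNIV. X$i$j * cnj (X$k$l) * X$j$l * cnj (X$i$k))"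
    by (simp add: delta_simps)
  also have "\<dots> = (\<Sum>i\<in>UNIV. (\<Sum>j\<in>UNIV. (X$i$j) * (\<Sum>k\<in>UNIV. (cnj (X$i$k)) * (\<Sum>l\<in>UNIV. (cnj (X$k$l) * X$j$l)))))"
  by (simp add: sum_distrib_left sum_distrib_right ac_simps)
  also have "\<dots> = (of_nat CARD('n)::complex)"
    by (simp add: evals)
  finally show ?thesis .
qed

lemma T23: "(\<Sum>i\<in>UNIV. \<Sum>j\<in>UNIV. \<Sum>k\<in>UNIV. \<Sum>l\<in>UNIV. \<Sum>i2\<in>UNIV. \<Sum>j2\<in>UNIV. \<Sum>k2\<in>UNIV. \<Sum>l2\<in>UNIV. X$i$j * cnj (X$k$l) * X$i2$j2 * cnj (X$k2$l2) * (dl i k2 * dl l j2 * dl i2 k * dl l2 j)) = (of_nat CARD('n)::complex) * (of_nat CARD('n)::complex)"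
proof -
  have "(\<Sum>i\<in>UNIV. \<Sum>j\<in>UNIV. \<Sum>k\<in>UNIV. \<Sum>l\<in>UNIV. \<Sum>i2\<in>UNIV. \<Sum>j2\<in>UNIV. \<Sum>k2\<in>UNIV. \<Sum>l2\<in>UNIV. X$i$j * cnj (X$k$l) * X$i2$j2 * cnj (X$k2$l2) * (dl i k2 * dl l j2 * dl i2 k * dl l2 j)) = (\<Sum>i\<in>UNIV. \<Sum>j\<in>UNIV. \<Sum>k\<in>UNIV. \<Sum>l\<in>UNIV. X$i$j * cnj (X$k$l) * X$k$l * cnj (X$i$j))"
    by (simp add: delta_simps)
  also have "\<dots> = (\<Sum>i\<in>UNIV. (\<Sum>j\<in>UNIV. (X$i$j * cnj (X$i$j)) * (\<Sum>k\<in>UNIV. (\<Sum>l\<in>UNIV. (cnj (X$k$l) * X$k$l)))))"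
  by (simp add: sum_distrib_left sum_distrib_right ac_simps)
  also have "\<dots> = (of_nat CARD('n)::complex) * (of_nat CARD('n)::complex)"
    by (simp add: evals)
  finally show ?thesis .
qed

end

lemma hh2_expand: "(braket \<psi> X * cnj (braket \<psi> X)) * (braket \<psi> X * cnj (braket \<psi> X)) =
   (\<Sum>i\<in>UNIV. \<Sum>j\<in>UNIV. \<Sum>k\<in>UNIV. \<Sum>l\<in>UNIV. \<Sum>i2\<in>UNIV. \<Sum>j2\<in>UNIV. \<Sum>k2\<in>UNIV. \<Sum>l2\<in>UNIV. X$i$j * cnj (X$k$l) * X$i2$j2 * cnj (X$k2$l2) * monoI [i,l,i2,l2] [j,k,j2,k2] \<psi>)"
proof -
  have 1: "(\<Sum>i\<in>A. \<Sum>j\<in>B. \<Sum>k\<in>C. \<Sum>l\<in>D. f i j k l) * G = (\<Sum>i\<in>A. \<Sum>j\<in>B. \<Sum>k\<in>C. \<Sum>l\<in>D. f i j k l * G)" for A B C D f and G :: complex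
    by (simp add: sum_distrib_right)
  have 2: "F * (\<Sum>i\<in>A. \<Sum>j\<in>B. \<Sum>k\<in>C. \<Sum>l\<in>D. g i j k l) = (\<Sum>i\<in>A. \<Sum>j\<in>B. \<Sum>k\<in>C. \<Sum>l\<in>D. F * g i j k l)" for A B C D g and F :: complex
    by (simp add: sum_distrib_left)
  have "(braket \<psi> X * cnj (braket \<psi> X)) * (braket \<psi> X * cnj (braket \<psi> X)) =
    (\<Sum>i\<in>UNIV. \<Sum>j\<in>UNIV. \<Sum>k\<in>UNIV. \<Sum>l\<in>UNIV. (X$i$j * cnj (X$k$l)) * monoI [i,l] [j,k] \<psi>) *
    (\<Sum>i\<in>UNIV. \<Sum>j\<in>UNIV. \<Sum>k\<in>UNIV. \<Sum>l\<in>UNIV. (X$i$j * cnj (X$k$l)) * monoI [i,l] [j,k] \<psi>)"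
    unfolding hh_expand ..
  also have "\<dots> = (\<Sum>i\<in>UNIV. \<Sum>j\<in>UNIV. \<Sum>k\<in>UNIV. \<Sum>l\<in>UNIV. \<Sum>i2\<in>UNIV. \<Sum>j2\<in>UNIV. \<Sum>k2\<in>UNIV. \<Sum>l2\<in>UNIV.
      ((X$i$j * cnj (X$k$l)) * monoI [i,l] [j,k] \<psi>) * ((X$i2$j2 * cnj (X$k2$l2)) * monoI [i2,l2] [j2,k2] \<psi>))"
    by (subst 1, simp only: 2)
  also have "\<dots> = (\<Sum>i\<in>UNIV. \<Sum>j\<in>UNIV. \<Sum>k\<in>UNIV. \<Sum>l\<in>UNIV. \<Sum>i2\<in>UNIV. \<Sum>j2\<in>UNIV. \<Sum>k2\<in>UNIV. \<Sum>l2\<in>UNIV. X$i$j * cnj (X$k$l) * X$i2$j2 * cnj (X$k2$l2) * monoI [i,l,i2,l2] [j,k,j2,k2] \<psi>)"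
    by (intro sum.cong refl) (simp add: monoI_def ac_simps)
  finally show ?thesis .
qed

context haar
begin

lemma Ec_sum8:
  assumes "\<And>i j k l i2 j2 k2 l2. continuous_on UNIV (f i j k l i2 j2 k2 l2)"
  shows "Ec (\<lambda>\<psi>. \<Sum>i\<in>UNIV. \<Sum>j\<in>UNIV. \<Sum>k\<in>UNIV. \<Sum>l\<in>UNIV. \<Sum>i2\<in>UNIV. \<Sum>j2\<in>UNIV. \<Sum>k2\<in>UNIV. \<Sum>l2\<in>UNIV. f i j k l i2 j2 k2 l2 \<psi>) =
    (\<Sum>i\<in>UNIV. \<Sum>j\<in>UNIV. \<Sum>k\<in>UNIV. \<Sum>l\<in>UNIV. \<Sum>i2\<in>UNIV. \<Sum>j2\<in>UNIV. \<Sum>k2\<in>UNIV. \<Sum>l2\<in>UNIV. Ec (f i j k l i2 j2 k2 l2))"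
  by (simp add: Ec_sum continuous_intros assms)

lemma D_complex:
  assumes U: "unitary_cmat X"
  shows "Ec (\<lambda>\<psi>. (braket \<psi> X * cnj (braket \<psi> X)) * (braket \<psi> X * cnj (braket \<psi> X))) =
    (2 * dd * (dd + 3) + 4 * (dd + 2) * (trace X * cnj (trace X)) + trace (X ** X) * cnj (trace (X ** X))
     + (trace X * cnj (trace X))^2 + (trace (X ** X) * cnj (trace X)^2 + cnj (trace (X ** X)) * trace X ^ 2)) / NN"
proof -
  have "Ec (\<lambda>\<psi>. (braket \<psi> X * cnj (braket \<psi> X)) * (braket \<psi> X * cnj (braket \<psi> X))) =
    (\<Sum>i\<in>UNIV. \<Sum>j\<in>UNIV. \<Sum>k\<in>UNIV. \<Sum>l\<in>UNIV. \<Sum>i2\<in>UNIV. \<Sum>j2\<in>UNIV. \<Sum>k2\<in>UNIV. \<Sum>l2\<in>UNIV. Ec (\<lambda>\<psi>. X$i$j * cnj (X$k$l) * X$i2$j2 * cnj (X$k2$l2) * monoI [i,l,i2,l2] [j,k,j2,k2] \<psi>))"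
    unfolding hh2_expand by (rule Ec_sum8) (intro continuous_intros)
  also have "\<dots> = (\<Sum>i\<in>UNIV. \<Sum>j\<in>UNIV. \<Sum>k\<in>UNIV. \<Sum>l\<in>UNIV. \<Sum>i2\<in>UNIV. \<Sum>j2\<in>UNIV. \<Sum>k2\<in>UNIV. \<Sum>l2\<in>UNIV. X$i$j * cnj (X$k$l) * X$i2$j2 * cnj (X$k2$l2) * W [i,l,i2,l2] [j,k,j2,k2]) / NN"
    by (simp add: Ec_cmult mom4 sum_divide_distrib)
  also have "(\<Sum>i\<in>UNIV. \<Sum>j\<in>UNIV. \<Sum>k\<in>UNIV. \<Sum>l\<in>UNIV. \<Sum>i2\<in>UNIV. \<Sum>j2\<in>UNIV. \<Sum>k2\<in>UNIV. \<Sum>l2\<in>UNIV. X$i$j * cnj (X$k$l) * X$i2$j2 * cnj (X$k2$l2) * W [i,l,i2,l2] [j,k,j2,k2]) = 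
     2 * dd * (dd + 3) + 4 * (dd + 2) * (trace X * cnj (trace X)) + trace (X ** X) * cnj (trace (X ** X))
     + (trace X * cnj (trace X))^2 + (trace (X ** X) * cnj (trace X)^2 + cnj (trace (X ** X)) * trace X ^ 2)"
    apply (simp only: W4_explicit distrib_left sum.distrib T0[OF U] T1[OF U] T2[OF U] T3[OF U] T4[OF U] T5[OF U] T6[OF U] T7[OF U] T8[OF U] T9[OF U] T10[OF U] T11[OF U] T12[OF U] T13[OF U] T14[OF U] T15[OF U] T16[OF U] T17[OF U] T18[OF U] T19[OF U] T20[OF U] T21[OF U] T22[OF U] T23[OF U])
    apply (simp add: dd_def power2_eq_square algebra_simps)
    done
  finally show ?thesis .
qed

end

lemma trace_adj: "trace (cmat_adj X) = cnj (trace X)"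
  by (simp add: trace_def cmat_adj_def)

lemma of_real_cmod_sq: "complex_of_real ((cmod z)^2) = z * cnj z"
  using complex_norm_square[of z] by simp

lemma of_real_2Re: "complex_of_real (2 * Re z) = z + cnj z"
  by (simp add: complex_add_cnj)

theorem proposition4:
  fixes X :: "complex^'n^'n" and M :: "(complex^'n) measure"
  assumes "unitary_cmat X" and "haar_state_measure M"
  defines "d \<equiv> real CARD('n)"
  defines "F \<equiv> (\<integral>\<psi>. (cmod (braket \<psi> X))^2 \<partial>M)"
  defines "D2 \<equiv> (\<integral>\<psi>. (cmod (braket \<psi> X))^4 \<partial>M) - F^2"
  shows "F = (d + (cmod (trace X))^2) / (d * (d + 1)) \<and>
         D2 = (2 * d * (d + 3) + 4 * (d + 2) * (cmod (trace X))^2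
               + (cmod (trace (X ** X)))^2 + (cmod (trace X))^4
               + 2 * Re (trace (X ** X) * (trace (cmat_adj X))^2))
             / (d * (d + 1) * (d + 2) * (d + 3)) - F^2"
proof -
  interpret haar M by unfold_locales (rule assms(2))
  have dd: "complex_of_real d = dd" by (simp add: d_def dd_def)
  have cF: "complex_of_real F = Ec (\<lambda>\<psi>. braket \<psi> X * cnj (braket \<psi> X))"
    unfolding F_def Ec_def integral_complex_of_real[symmetric] of_real_cmod_sq ..
  have c4: "complex_of_real (\<integral>\<psi>. (cmod (braket \<psi> X))^4 \<partial>M) =
      Ec (\<lambda>\<psi>. (braket \<psi> X * cnj (braket \<psi> X)) * (braket \<psi> X * cnj (braket \<psi> X)))"
  proof -
    have pw: "complex_of_real ((cmod z)^4) = (z * cnj z) * (z * cnj z)" for z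
    proof -
      have "(cmod z)^4 = (cmod z)^2 * (cmod z)^2" by simp
      then show ?thesis by (simp only: of_real_mult of_real_cmod_sq)
    qed
    show ?thesis
      unfolding Ec_def integral_complex_of_real[symmetric] pw ..
  qed
  have dpos: "d > 0" by (simp add: d_def)
  have F1: "complex_of_real F = complex_of_real ((d + (cmod (trace X))^2) / (d * (d + 1)))"
    unfolding cF F_complex[OF assms(1)] of_real_divide of_real_add of_real_mult of_real_1 of_real_cmod_sq dd ..
  then have Fv: "F = (d + (cmod (trace X))^2) / (d * (d + 1))" by (simp only: of_real_eq_iff)
  have "complex_of_real D2 = complex_of_real ((2 * d * (d + 3) + 4 * (d + 2) * (cmod (trace X))^2
               + (cmod (trace (X ** X)))^2 + (cmod (trace X))^4
               + 2 * Re (trace (X ** X) * (trace (cmat_adj X))^2))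
             / (d * (d + 1) * (d + 2) * (d + 3)) - F^2)"
  proof -
    have "complex_of_real D2 = Ec (\<lambda>\<psi>. (braket \<psi> X * cnj (braket \<psi> X)) * (braket \<psi> X * cnj (braket \<psi> X))) - complex_of_real (F^2)"
      unfolding D2_def of_real_diff c4 ..
    also have "\<dots> = (2 * dd * (dd + 3) + 4 * (dd + 2) * (trace X * cnj (trace X)) + trace (X ** X) * cnj (trace (X ** X))
     + (trace X * cnj (trace X))^2 + (trace (X ** X) * cnj (trace X)^2 + cnj (trace (X ** X)) * trace X ^ 2)) / NN - complex_of_real (F^2)"
      by (simp add: D_complex[OF assms(1)])
    also have "\<dots> = complex_of_real ((2 * d * (d + 3) + 4 * (d + 2) * (cmod (trace X))^2
               + (cmod (trace (X ** X)))^2 + (cmod (trace X))^4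
               + 2 * Re (trace (X ** X) * (trace (cmat_adj X))^2))
             / (d * (d + 1) * (d + 2) * (d + 3)) - F^2)"
    proof -
      have e4: "complex_of_real ((cmod (trace X))^4) = (trace X * cnj (trace X))^2"
      proof -
        have h: "(cmod (trace X))^4 = (cmod (trace X))^2 * (cmod (trace X))^2" by simp
        show ?thesis unfolding h of_real_mult of_real_cmod_sq by (simp add: power2_eq_square)
      qed
      have e2: "complex_of_real (2 * Re (trace (X ** X) * (trace (cmat_adj X))^2)) =
          trace (X ** X) * cnj (trace X)^2 + cnj (trace (X ** X)) * trace X ^ 2"
        unfolding of_real_2Re trace_adj by simp
      show ?thesis
        apply (simp only: of_real_diff of_real_divide of_real_add e4 e2)
        apply (simp only: of_real_mult of_real_add of_real_cmod_sq dd NN_def of_real_numeral of_real_1)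
        done
    qed
    finally show ?thesis .
  qed
  then have "D2 = (2 * d * (d + 3) + 4 * (d + 2) * (cmod (trace X))^2
               + (cmod (trace (X ** X)))^2 + (cmod (trace X))^4
               + 2 * Re (trace (X ** X) * (trace (cmat_adj X))^2))
             / (d * (d + 1) * (d + 2) * (d + 3)) - F^2" by (simp only: of_real_eq_iff)
  with Fv show ?thesis by simp
qed

end
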